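(* Let $L\ge 2$ and let $N_1,\dots,N_L$ be positive integers. With the notation and setting described in the context, the root mean square error of the projected multilevel Monte Carlo estimator satisfies $$\Big(\mathbb{E}\big[\|E^{\mathrm{PML}}_L(u)-\mathbb{E}[u]\|_V^2\big]\Big)^{1/2}\;\le\; c_0\,\|u\| + \sum_{l=1}^{L} c_l\,\|u-u_l\|,$$ where $$c_0=N_1^{-1/2}+2\sum_{l=2}^L N_l^{-1/2},\qquad c_1=1+N_1^{-1/2}+2N_2^{-1/2},$$ $$c_l=2+2N_l^{-1/2}+2N_{l+1}^{-1/2}\ \ (l=2,\dots,L-1),\qquad c_L=2+2N_L^{-1/2}.$$
   Context: Let $(\Omega,\mathcal H,\mathbb P)$ be a probability space and $D\subset\mathbb R^d$ a bounded domain. Let $V=H^1_0(D)$ with inner product $(u,v)=\int_D(\nabla u\cdot\nabla v+uv)\,dx$ and norm $\|\cdot\|_V$. For a $V$-valued random variable $X\in L^2(\Omega;V)$, $\mathbb E[X]$ denotes its Bochner expectation (an element of $V$), $\|X\|:=(\mathbb E[\|X\|_V^2])^{1/2}$ is the $L^2(\Omega;V)$ norm, and $\mathrm{Var}[X]:=\mathbb E[\|X-\mathbb E[X]\|_V^2]$. Let $u\in L^2(\Omega;V)$ (the solution of the PDE with random input), let $V_1\subset V_2\subset\cdots\subset V_L\subset V$ be nested closed subspaces (e.g. nested piecewise linear finite element spaces on hierarchically refined triangulations), and let $u_l\in L^2(\Omega;V_l)$, $l=1,\dots,L$, be approximations of $u$ (e.g. Galerkin finite element approximations for the same realization of the random input);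 set $u_0:=0$. Let $P_1:=0$ and, for $l\ge 2$, let $P_l:V_l\to V_{l-1}$ be the orthogonal projection with respect to $(\cdot,\cdot)$, i.e. $(P_lw,v)=(w,v)$ for all $v\in V_{l-1}$. For each level $l$, let $u_l^{(l,1)},\dots,u_l^{(l,N_l)}$ be independent, identically distributed copies of $u_l$, with the sample collections for different levels mutually independent. The projected multilevel Monte Carlo (PMLMC) estimator is $$E^{\mathrm{PML}}_L(u)=\sum_{l=1}^L\frac1{N_l}\sum_{k=1}^{N_l}(I-P_l)\,u_l^{(l,k)}.$$ *)

theory Defs
  imports "HOL-Probability.Probability"
begin

definition orth_proj :: "'v::real_inner set \<Rightarrow> 'v \<Rightarrow> 'v" where
  "orth_proj S w = (THE p. p \<in> S \<and> (\<forall>v\<in>S. inner p v = inner w v))"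

definition Pproj :: "(nat \<Rightarrow> 'v::real_inner set) \<Rightarrow> nat \<Rightarrow> 'v \<Rightarrow> 'v" where
  "Pproj V l w = (if l \<le> 1 then 0 else orth_proj (V (l - 1)) w)"

definition L2rv :: "'w measure \<Rightarrow> ('w \<Rightarrow> 'v::real_normed_vector) \<Rightarrow> bool" where
  "L2rv M X \<longleftrightarrow> X \<in> borel_measurable M \<and> integrable M (\<lambda>\<omega>. (norm (X \<omega>))\<^sup>2)"

definition L2norm :: "'w measure \<Rightarrow> ('w \<Rightarrow> 'v::real_normed_vector) \<Rightarrow> real" where
  "L2norm M X = sqrt (integral\<^sup>L M (\<lambda>\<omega>. (norm (X \<omega>))\<^sup>2))"

text \<open>The PMLMC estimator, evaluated at omega; Xs l k = k-th sample on level l.\<close>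
definition E_PML :: "(nat \<Rightarrow> 'v::real_inner set) \<Rightarrow> nat \<Rightarrow> (nat \<Rightarrow> nat)
    \<Rightarrow> (nat \<Rightarrow> nat \<Rightarrow> 'w \<Rightarrow> 'v) \<Rightarrow> 'w \<Rightarrow> 'v" where
  "E_PML V L N Xs \<omega> =
     (\<Sum>l = 1..L. (1 / real (N l)) *\<^sub>R (\<Sum>k = 1..N l. Xs l k \<omega> - Pproj V l (Xs l k \<omega>)))"

definition c0 :: "nat \<Rightarrow> (nat \<Rightarrow> nat) \<Rightarrow> real" where
  "c0 L N = 1 / sqrt (real (N 1)) + 2 * (\<Sum>l = 2..L. 1 / sqrt (real (N l)))"

definition cl :: "nat \<Rightarrow> (nat \<Rightarrow> nat) \<Rightarrow> nat \<Rightarrow> real" where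
  "cl L N l =
     (if l = 1 then 1 + 1 / sqrt (real (N 1)) + 2 / sqrt (real (N 2))
      else if l = L then 2 + 2 / sqrt (real (N L))
      else 2 + 2 / sqrt (real (N l)) + 2 / sqrt (real (N (l + 1))))"

end

theory Submission
  imports Defs
begin

lemma infdist_approx:
  fixes S :: "'a::metric_space set"
  assumes ne: "S \<noteq> {}" and e: "e > 0"
  shows "\<exists>a\<in>S. dist x a < infdist x S + e"
proof -
  have eq: "infdist x S = (INF a\<in>S. dist x a)" by (rule infdist_notempty[OF ne])
  have bdd: "bdd_below ((\<lambda>a. dist x a) ` S)" by (rule bdd_belowI2[of _ 0]) simp
  have "(INF a\<in>S. dist x a) < infdist x S + e" using e unfolding eq by linarith
  then show ?thesis using cINF_less_iff[OF ne bdd] by blast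
qed

lemma norm_diff_scale_sq:
  fixes a u :: "'v::real_inner"
  shows "(norm (a - c *\<^sub>R u))\<^sup>2 = inner a a - 2*c*inner a u + c*c*inner u u"
proof -
  have "(norm (a - c *\<^sub>R u))\<^sup>2 = inner (a - c *\<^sub>R u) (a - c *\<^sub>R u)" by (simp add: power2_norm_eq_inner)
  also have "\<dots> = inner a a - c * inner u a - c * inner a u + c*c*inner u u"
    by (simp only: inner_diff_left inner_diff_right inner_scaleR_left inner_scaleR_right) (simp add: algebra_simps)
  also have "\<dots> = inner a a - 2*c*inner a u + c*c*inner u u" by (simp add: inner_commute[of u a])
  finally show ?thesis .
qed

lemma real_quad_aux:
  fixes A x y :: real
  assumes "y > 0"
  shows "A - 2 * (x / y) * x + (x / y) * (x / y) * y = A - x\<^sup>2 / y"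
  using assms by (simp add: power2_eq_square divide_simps)

lemma min_orth:
  fixes a u :: "'v::real_inner"
  assumes "\<forall>t. (norm a)\<^sup>2 \<le> (norm (a - t *\<^sub>R u))\<^sup>2"
  shows "inner a u = 0"
proof (cases "u = 0")
  case True then show ?thesis by simp
next
  case False
  define c where "c = inner a u / inner u u"
  have uu: "inner u u > 0" using False by simp
  have "(norm a)\<^sup>2 \<le> (norm (a - c *\<^sub>R u))\<^sup>2" using assms by blast
  also have "\<dots> = inner a a - 2 * c * inner a u + c * c * inner u u"
    by (rule norm_diff_scale_sq)
  also have "\<dots> = inner a a - (inner a u)\<^sup>2 / inner u u"
    unfolding c_def using uu by (rule real_quad_aux)
  finally have X: "(norm a)\<^sup>2 \<le> inner a a - (inner a u)\<^sup>2 / inner u u" .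
  have "(norm a)\<^sup>2 = inner a a" by (rule power2_norm_eq_inner)
  with X have "(inner a u)\<^sup>2 / inner u u \<le> 0" by linarith
  then have "(inner a u)\<^sup>2 \<le> 0" by (subst (asm) pos_divide_le_eq[OF uu]) simp
  then show ?thesis by simp
qed

lemma parallelogram_mid:
  fixes w x y :: "'v::real_inner"
  shows "(norm (x - y))\<^sup>2 = 2 * (norm (w - x))\<^sup>2 + 2 * (norm (w - y))\<^sup>2
        - 4 * (norm (w - (1/2) *\<^sub>R (x + y)))\<^sup>2"
proof -
  define a where "a = w - x"
  define b where "b = w - y"
  have e1: "x - y = b - a" unfolding a_def b_def by simp
  have ab: "a + b = 2 *\<^sub>R w - (x + y)" unfolding a_def b_def by (simp add: scaleR_2)
  have e2: "w - (1/2) *\<^sub>R (x + y) = (1/2) *\<^sub>R (a + b)" unfolding ab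
    by (simp add: scaleR_diff_right)
  have p1: "(norm (b - a))\<^sup>2 = inner b b - 2 * inner a b + inner a a"
    unfolding power2_norm_eq_inner
    by (simp only: inner_diff_left inner_diff_right inner_commute[of b a]; simp)
  have p2: "(norm ((1/2) *\<^sub>R (a + b)))\<^sup>2 = (1/4) * (inner a a + 2 * inner a b + inner b b)"
    unfolding power2_norm_eq_inner
    by (simp add: inner_add_left inner_add_right inner_commute[of b a] algebra_simps)
  have n1: "(norm (w - x))\<^sup>2 = inner a a" unfolding a_def by (rule power2_norm_eq_inner)
  have n2: "(norm (w - y))\<^sup>2 = inner b b" unfolding b_def by (rule power2_norm_eq_inner)
  show ?thesis unfolding e1 e2 p1 p2 n1 n2 by (simp add: algebra_simps)
qed

lemma orth_proj_exists:
  fixes S :: "'v::{real_inner,complete_space} set"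
  assumes sub: "subspace S" and cl: "closed S"
  shows "\<exists>p\<in>S. \<forall>v\<in>S. inner (w - p) v = 0"
proof -
  define d where "d = infdist w S"
  have d0: "d \<ge> 0" unfolding d_def by (rule infdist_nonneg)
  have Sne: "S \<noteq> {}" using sub subspace_0 by blast
  have dle: "d \<le> norm (w - v)" if "v \<in> S" for v
    using infdist_le[OF that, of w] by (simp add: d_def dist_norm)
  have "\<forall>n. \<exists>a\<in>S. dist w a < d + 1 / real (Suc n)"
    using infdist_approx[OF Sne] d_def by simp
  then obtain v where vS: "\<And>n. v n \<in> S" and vd: "\<And>n. norm (w - v n) < d + 1 / real (Suc n)"
    by (metis dist_norm)
  define \<delta> where "\<delta> n = (2*d+1) / real (Suc n)" for n
  have sq: "(norm (w - v n))\<^sup>2 \<le> d\<^sup>2 + \<delta> n" for n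
  proof -
    have a: "0 \<le> norm (w - v n)" by simp
    have "(norm (w - v n))\<^sup>2 \<le> (d + 1 / real (Suc n))\<^sup>2"
      using vd[of n] a by (intro power_mono) auto
    also have "\<dots> = d\<^sup>2 + (2*d + 1/real (Suc n)) / real (Suc n)"
    proof -
      have "\<And>x::real. x > 0 \<Longrightarrow> (d + 1/x)\<^sup>2 = d\<^sup>2 + (2*d + 1/x)/x"
        by (simp add: power2_eq_square add_divide_distrib diff_divide_distrib ring_distribs)
      then show ?thesis by simp
    qed
    also have "\<dots> \<le> d\<^sup>2 + \<delta> n" unfolding \<delta>_def
      by (intro add_left_mono divide_right_mono) (auto simp: field_simps)
    finally show ?thesis .
  qed
  have par: "(norm (v n - v m))\<^sup>2 \<le> 2 * \<delta> n + 2 * \<delta> m" for n m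
  proof -
    have mid: "(1/2) *\<^sub>R (v n + v m) \<in> S"
      using sub vS by (simp add: subspace_add subspace_scale)
    have "d \<le> norm (w - (1/2) *\<^sub>R (v n + v m))" by (rule dle[OF mid])
    then have "d\<^sup>2 \<le> (norm (w - (1/2) *\<^sub>R (v n + v m)))\<^sup>2"
      using d0 by (intro power_mono) auto
    moreover have "(norm (v n - v m))\<^sup>2 = 2 * (norm (w - v n))\<^sup>2 + 2 * (norm (w - v m))\<^sup>2
        - 4 * (norm (w - (1/2) *\<^sub>R (v n + v m)))\<^sup>2"
      by (rule parallelogram_mid)
    ultimately show ?thesis using sq[of n] sq[of m] by linarith
  qed
  have dmono: "\<delta> n \<le> \<delta> N" if "N \<le> n" for n N
    unfolding \<delta>_def using d0 that by (intro divide_left_mono) auto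
  have "Cauchy v"
  proof (rule metric_CauchyI)
    fix e :: real assume e: "e > 0"
    obtain N :: nat where N0: "(2*d+1) / (e\<^sup>2/4) < real N"
      using reals_Archimedean2 by blast
    then have N: "(2*d+1) / (e\<^sup>2/4) < real (Suc N)" by simp
    have e2: "e\<^sup>2 / 4 > 0" using e by simp
    have dN: "\<delta> N < e\<^sup>2/4"
      unfolding \<delta>_def using N e2 by (simp only: divide_less_eq pos_divide_less_eq) (simp add: mult.commute)
    show "\<exists>M. \<forall>m\<ge>M. \<forall>n\<ge>M. dist (v m) (v n) < e"
    proof (intro exI allI impI)
      fix m n assume "N \<le> m" "N \<le> n"
      then have "(norm (v m - v n))\<^sup>2 < e\<^sup>2"
        using par[of m n] dmono[of N m] dmono[of N n] dN by linarith
      then show "dist (v m) (v n) < e" using e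
        by (simp add: dist_norm power_less_imp_less_base)
    qed
  qed
  then obtain p where lim: "v \<longlonglongrightarrow> p" using Cauchy_convergent convergent_def by blast
  have pS: "p \<in> S" using cl vS lim closed_sequentially by blast
  have dlim: "\<delta> \<longlonglongrightarrow> 0"
  proof -
    have "(\<lambda>n. (2*d+1) * inverse (real (Suc n))) \<longlonglongrightarrow> (2*d+1) * 0"
      by (intro tendsto_intros LIMSEQ_inverse_real_of_nat)
    then show ?thesis unfolding \<delta>_def by (simp add: divide_inverse)
  qed
  have l1: "(\<lambda>n. (norm (w - v n))\<^sup>2) \<longlonglongrightarrow> (norm (w - p))\<^sup>2"
    by (intro tendsto_intros lim)
  have l2: "(\<lambda>n. d\<^sup>2 + \<delta> n) \<longlonglongrightarrow> d\<^sup>2 + 0" by (intro tendsto_intros dlim)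
  have l3: "\<exists>N. \<forall>n\<ge>N. (norm (w - v n))\<^sup>2 \<le> d\<^sup>2 + \<delta> n" using sq by blast
  have pd: "(norm (w - p))\<^sup>2 \<le> d\<^sup>2"
    using LIMSEQ_le[OF l1 l2 l3] by simp
  show ?thesis
  proof (intro bexI[OF _ pS] ballI)
    fix u assume uS: "u \<in> S"
    have "\<forall>t. (norm (w - p))\<^sup>2 \<le> (norm ((w - p) - t *\<^sub>R u))\<^sup>2"
    proof
      fix t
      have qS: "p + t *\<^sub>R u \<in> S" using sub pS uS by (simp add: subspace_add subspace_scale)
      have "d \<le> norm (w - (p + t *\<^sub>R u))" by (rule dle[OF qS])
      then have "d\<^sup>2 \<le> (norm (w - (p + t *\<^sub>R u)))\<^sup>2" using d0 by (intro power_mono) auto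
      moreover have "w - (p + t *\<^sub>R u) = (w - p) - t *\<^sub>R u" by (simp add: algebra_simps)
      ultimately have "d\<^sup>2 \<le> (norm ((w - p) - t *\<^sub>R u))\<^sup>2" by (simp only:)
      with pd show "(norm (w - p))\<^sup>2 \<le> (norm ((w - p) - t *\<^sub>R u))\<^sup>2" by linarith
    qed
    then show "inner (w - p) u = 0" by (rule min_orth)
  qed
qed

lemma pyth:
  fixes a b :: "'v::real_inner"
  assumes "inner a b = 0"
  shows "(norm (a + b))\<^sup>2 = (norm a)\<^sup>2 + (norm b)\<^sup>2"
  using assms unfolding power2_norm_eq_inner
  by (simp add: inner_add_left inner_add_right inner_commute[of b a])

lemma orth_proj_char:
  fixes S :: "'v::{real_inner,complete_space} set"
  assumes sub: "subspace S" and cl: "closed S"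
  shows "orth_proj S w \<in> S \<and> (\<forall>v\<in>S. inner (w - orth_proj S w) v = 0)"
proof -
  obtain p where pS: "p \<in> S" and po: "\<forall>v\<in>S. inner (w - p) v = 0"
    using orth_proj_exists[OF sub cl] by blast
  have P: "p \<in> S \<and> (\<forall>v\<in>S. inner p v = inner w v)"
    using pS po by (simp add: inner_diff_left)
  have U: "q = p" if q: "q \<in> S \<and> (\<forall>v\<in>S. inner q v = inner w v)" for q
  proof -
    have d: "q - p \<in> S" using q pS sub by (simp add: subspace_diff)
    have "inner (q - p) (q - p) = 0"
      using q P d by (simp add: inner_diff_left)
    then show ?thesis by simp
  qed
  have "orth_proj S w = p" unfolding orth_proj_def
    using P U by (rule the_equality)
  then show ?thesis using pS po by simp
qed

lemma orth_proj_best: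
  fixes S :: "'v::{real_inner,complete_space} set"
  assumes sub: "subspace S" and cl: "closed S" and v: "v \<in> S"
  shows "norm (w - orth_proj S w) \<le> norm (w - v)"
    and "norm (v - orth_proj S w) \<le> norm (v - w)"
proof -
  let ?p = "orth_proj S w"
  have pS: "?p \<in> S" and o: "\<forall>v\<in>S. inner (w - ?p) v = 0" using orth_proj_char[OF sub cl] by auto
  have d: "?p - v \<in> S" using pS v sub by (simp add: subspace_diff)
  have "(norm (w - v))\<^sup>2 = (norm (w - ?p))\<^sup>2 + (norm (?p - v))\<^sup>2"
  proof -
    have "w - v = (w - ?p) + (?p - v)" by simp
    then show ?thesis using pyth[of "w - ?p" "?p - v"] o d by simp
  qed
  then have "(norm (w - ?p))\<^sup>2 \<le> (norm (w - v))\<^sup>2 \<and> (norm (?p - v))\<^sup>2 \<le> (norm (w - v))\<^sup>2"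
    using zero_le_power2[of "norm (w - ?p)"] zero_le_power2[of "norm (?p - v)"] by linarith
  then show "norm (w - ?p) \<le> norm (w - v)" "norm (v - ?p) \<le> norm (v - w)"
    by (simp_all add: power2_le_iff_abs_le norm_minus_commute[of v])
qed

lemma orth_proj_lip:
  fixes S :: "'v::{real_inner,complete_space} set"
  assumes sub: "subspace S" and cl: "closed S"
  shows "norm (orth_proj S x - orth_proj S y) \<le> norm (x - y)"
proof -
  let ?px = "orth_proj S x" and ?py = "orth_proj S y"
  have x: "?px \<in> S" "\<forall>v\<in>S. inner (x - ?px) v = 0" using orth_proj_char[OF sub cl] by auto
  have y: "?py \<in> S" "\<forall>v\<in>S. inner (y - ?py) v = 0" using orth_proj_char[OF sub cl] by auto
  have d: "?px - ?py \<in> S" using x y sub by (simp add: subspace_diff)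
  have "inner ((x - ?px) - (y - ?py)) (?px - ?py) = 0"
    using x y d by (simp add: inner_diff_left)
  then have "(norm (((x - ?px) - (y - ?py)) + (?px - ?py)))\<^sup>2
      = (norm ((x - ?px) - (y - ?py)))\<^sup>2 + (norm (?px - ?py))\<^sup>2" by (rule pyth)
  moreover have "((x - ?px) - (y - ?py)) + (?px - ?py) = x - y" by simp
  ultimately have "(norm (?px - ?py))\<^sup>2 \<le> (norm (x - y))\<^sup>2" by simp
  then show ?thesis by (simp add: power2_le_iff_abs_le)
qed

definition Pgood :: "(nat \<Rightarrow> 'v::real_inner set) \<Rightarrow> nat \<Rightarrow> bool" where
  "Pgood V l \<longleftrightarrow> (l \<le> 1 \<or> (subspace (V (l - 1)) \<and> closed (V (l - 1))))"

lemma Pproj_lip: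
  fixes V :: "nat \<Rightarrow> 'v::{real_inner,complete_space} set"
  assumes "Pgood V l"
  shows "norm (Pproj V l x - Pproj V l y) \<le> norm (x - y)"
  using assms orth_proj_lip[of "V (l - 1)" x y] by (auto simp: Pgood_def Pproj_def)

lemma Pproj_0:
  fixes V :: "nat \<Rightarrow> 'v::{real_inner,complete_space} set"
  assumes "Pgood V l"
  shows "Pproj V l 0 = 0"
proof (cases "l \<le> 1")
  case True then show ?thesis by (simp add: Pproj_def)
next
  case False
  then have sc: "subspace (V (l - 1))" "closed (V (l - 1))" using assms by (auto simp: Pgood_def)
  have "norm (0 - orth_proj (V (l - 1)) 0) \<le> norm (0 - (0::'v))"
    by (rule orth_proj_best(1)[OF sc subspace_0[OF sc(1)]])
  then show ?thesis using False by (simp add: Pproj_def)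
qed

lemma Pproj_norm:
  fixes V :: "nat \<Rightarrow> 'v::{real_inner,complete_space} set"
  assumes "Pgood V l"
  shows "norm (Pproj V l x) \<le> norm x"
  using Pproj_lip[OF assms, of x 0] Pproj_0[OF assms] by simp

lemma Pproj_cont:
  fixes V :: "nat \<Rightarrow> 'v::{real_inner,complete_space} set"
  assumes "Pgood V l"
  shows "continuous_on UNIV (Pproj V l)"
proof -
  have "1-lipschitz_on UNIV (Pproj V l)"
    by (rule lipschitz_onI) (use Pproj_lip[OF assms] in \<open>simp_all add: dist_norm\<close>)
  then show ?thesis by (rule lipschitz_on_continuous_on)
qed

lemma Pproj_meas:
  fixes V :: "nat \<Rightarrow> 'v::{real_inner,complete_space,second_countable_topology} set"
  assumes "Pgood V l"
  shows "Pproj V l \<in> borel_measurable borel"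
  by (rule borel_measurable_continuous_onI[OF Pproj_cont[OF assms]])

lemma Pproj_best:
  fixes V :: "nat \<Rightarrow> 'v::{real_inner,complete_space} set"
  assumes "Pgood V l" and "l \<ge> 2" and "v \<in> V (l - 1)"
  shows "norm (x - Pproj V l x) \<le> norm (x - v)" and "norm (v - Pproj V l x) \<le> norm (v - x)"
proof -
  have sc: "subspace (V (l - 1))" "closed (V (l - 1))" using assms by (auto simp: Pgood_def)
  show "norm (x - Pproj V l x) \<le> norm (x - v)" "norm (v - Pproj V l x) \<le> norm (v - x)"
    using orth_proj_best[OF sc assms(3), of x] assms(2) by (auto simp: Pproj_def)
qed

instance prod :: ("{real_normed_vector, complete_space}", "{real_normed_vector, complete_space}") banach ..

lemma bl_emb: "bounded_linear (\<lambda>x::'v::real_normed_vector. (x, 0::'v))"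
  by (rule bounded_linear_Pair[OF bounded_linear_ident bounded_linear_zero])

lemma integrable_emb:
  fixes f :: "'a \<Rightarrow> 'v::{real_normed_vector, second_countable_topology}"
  shows "integrable M (\<lambda>x. (f x, 0::'v)) \<longleftrightarrow> integrable M f"
proof
  assume "integrable M (\<lambda>x. (f x, 0::'v))"
  from integrable_bounded_linear[OF bounded_linear_fst this] show "integrable M f" by simp
next
  assume "integrable M f"
  from integrable_bounded_linear[OF bl_emb this] show "integrable M (\<lambda>x. (f x, 0::'v))" .
qed

lemma integral_emb:
  fixes f :: "'a \<Rightarrow> 'v::{real_normed_vector, second_countable_topology}"
  shows "integral\<^sup>L M (\<lambda>x. (f x, 0::'v)) = (integral\<^sup>L M f, 0)"
  by (rule integral_bounded_linear'[OF bl_emb bounded_linear_fst]) simp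

lemma integrable_bound_v:
  fixes f :: "'a \<Rightarrow> 'v::{real_normed_vector, complete_space, second_countable_topology}"
    and g :: "'a \<Rightarrow> real"
  assumes "integrable M g" "f \<in> borel_measurable M" "AE x in M. norm (f x) \<le> norm (g x)"
  shows "integrable M f"
proof -
  have "integrable M (\<lambda>x. (f x, 0::'v))"
    using assms(1) by (rule Bochner_Integration.integrable_bound) (use assms(2,3) in auto)
  then show ?thesis by (simp add: integrable_emb)
qed

lemma integrable_norm_v:
  fixes f :: "'a \<Rightarrow> 'v::{real_normed_vector, complete_space, second_countable_topology}"
  assumes "integrable M f" shows "integrable M (\<lambda>x. norm (f x))"
proof -
  have "integrable M (\<lambda>x. (f x, 0::'v))" using assms by (simp add: integrable_emb)
  from Bochner_Integration.integrable_norm[OF this] show ?thesis by simp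
qed

lemma integral_norm_bound_v:
  fixes f :: "'a \<Rightarrow> 'v::{real_normed_vector, complete_space, second_countable_topology}"
  shows "norm (integral\<^sup>L M f) \<le> integral\<^sup>L M (\<lambda>x. norm (f x))"
proof (cases "integrable M f")
  case True
  have "norm (integral\<^sup>L M f) = norm (integral\<^sup>L M (\<lambda>x. (f x, 0::'v)))"
    by (simp add: integral_emb)
  also have "\<dots> \<le> integral\<^sup>L M (\<lambda>x. norm (f x, 0::'v))"
    by (rule Bochner_Integration.integral_norm_bound)
  finally show ?thesis by simp
next
  case False
  then show ?thesis by (simp add: not_integrable_integral_eq)
qed

lemma integrable_distr_eq_v:
  fixes f :: "'b \<Rightarrow> 'v::{real_normed_vector, complete_space, second_countable_topology}"
  assumes [measurable]: "g \<in> measurable M N" "f \<in> borel_measurable N"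
  shows "integrable (distr M N g) f \<longleftrightarrow> integrable M (\<lambda>x. f (g x))"
proof -
  have "integrable (distr M N g) (\<lambda>x. (f x, 0::'v)) \<longleftrightarrow> integrable M (\<lambda>x. (f (g x), 0::'v))"
    by (rule integrable_distr_eq) measurable
  then show ?thesis by (simp add: integrable_emb)
qed

lemma integral_distr_v:
  fixes f :: "'b \<Rightarrow> 'v::{real_normed_vector, complete_space, second_countable_topology}"
  assumes [measurable]: "g \<in> measurable M N" "f \<in> borel_measurable N"
  shows "integral\<^sup>L (distr M N g) f = integral\<^sup>L M (\<lambda>x. f (g x))"
proof -
  have "integral\<^sup>L (distr M N g) (\<lambda>x. (f x, 0::'v)) = integral\<^sup>L M (\<lambda>x. (f (g x), 0::'v))"
    by (rule integral_distr) measurable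
  then show ?thesis by (simp add: integral_emb)
qed


context prob_space
begin

lemma L2_integrable_norm2:
  fixes f :: "'a \<Rightarrow> 'v::{real_inner, complete_space, second_countable_topology}"
  assumes "L2rv M f" shows "integrable M (\<lambda>x. (norm (f x))\<^sup>2)"
  using assms by (simp add: L2rv_def)

lemma L2_meas:
  fixes f :: "'a \<Rightarrow> 'v::{real_inner, complete_space, second_countable_topology}"
  assumes "L2rv M f" shows "f \<in> borel_measurable M"
  using assms by (simp add: L2rv_def)

lemma L2_integrable:
  fixes f :: "'a \<Rightarrow> 'v::{real_inner, complete_space, second_countable_topology}"
  assumes "L2rv M f" shows "integrable M f"
proof (rule integrable_bound_v[where g="\<lambda>x. 1 + (norm (f x))\<^sup>2"])
  show "integrable M (\<lambda>x. 1 + (norm (f x))\<^sup>2)"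
    using L2_integrable_norm2[OF assms] by simp
  show "f \<in> borel_measurable M" by (rule L2_meas[OF assms])
  show "AE x in M. norm (f x) \<le> norm (1 + (norm (f x))\<^sup>2)"
  proof (rule AE_I2)
    fix x
    have a: "2 * norm (f x) \<le> 1 + (norm (f x))\<^sup>2"
      using sum_squares_ge_zero[of "norm (f x) - 1" 0] by (simp add: power2_eq_square algebra_simps)
    have "norm (f x) \<le> 1 + (norm (f x))\<^sup>2" using a norm_ge_zero[of "f x"] by linarith
    then show "norm (f x) \<le> norm (1 + (norm (f x))\<^sup>2)" by simp
  qed
qed

lemma L2_integrable_norm:
  fixes f :: "'a \<Rightarrow> 'v::{real_inner, complete_space, second_countable_topology}"
  assumes "L2rv M f" shows "integrable M (\<lambda>x. norm (f x))"
  by (rule integrable_norm_v[OF L2_integrable[OF assms]])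

lemma L2_bound:
  fixes f :: "'a \<Rightarrow> 'v::{real_inner, complete_space, second_countable_topology}"
    and g :: "'a \<Rightarrow> 'u::{real_inner, complete_space, second_countable_topology}"
  assumes "L2rv M g" "f \<in> borel_measurable M" "\<And>x. x \<in> space M \<Longrightarrow> norm (f x) \<le> c * norm (g x)"
  shows "L2rv M f"
  unfolding L2rv_def
proof
  show "f \<in> borel_measurable M" by fact
  show "integrable M (\<lambda>x. (norm (f x))\<^sup>2)"
  proof (rule Bochner_Integration.integrable_bound[where f="\<lambda>x. c\<^sup>2 * (norm (g x))\<^sup>2"])
    show "integrable M (\<lambda>x. c\<^sup>2 * (norm (g x))\<^sup>2)" using L2_integrable_norm2[OF assms(1)] by simp
    show "(\<lambda>x. (norm (f x))\<^sup>2) \<in> borel_measurable M" using assms(2) by measurable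
    show "AE x in M. norm ((norm (f x))\<^sup>2) \<le> norm (c\<^sup>2 * (norm (g x))\<^sup>2)"
    proof (rule AE_I2)
      fix x assume x: "x \<in> space M"
      have "0 \<le> norm (f x)" by simp
      then have "0 \<le> c * norm (g x)" using assms(3)[OF x] by linarith
      then have "(norm (f x))\<^sup>2 \<le> (c * norm (g x))\<^sup>2" using assms(3)[OF x] by (intro power_mono) auto
      then show "norm ((norm (f x))\<^sup>2) \<le> norm (c\<^sup>2 * (norm (g x))\<^sup>2)"
        by (simp add: power_mult_distrib)
    qed
  qed
qed

lemma L2_const:
  fixes c :: "'v::{real_inner, complete_space, second_countable_topology}"
  shows "L2rv M (\<lambda>x. c)"
  unfolding L2rv_def by simp

lemma L2_add:
  fixes f g :: "'a \<Rightarrow> 'v::{real_inner, complete_space, second_countable_topology}"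
  assumes f: "L2rv M f" and g: "L2rv M g"
  shows "L2rv M (\<lambda>x. f x + g x)"
  unfolding L2rv_def
proof
  have [measurable]: "f \<in> borel_measurable M" "g \<in> borel_measurable M" using f g by (simp_all add: L2rv_def)
  show "(\<lambda>x. f x + g x) \<in> borel_measurable M" by measurable
  show "integrable M (\<lambda>x. (norm (f x + g x))\<^sup>2)"
  proof (rule Bochner_Integration.integrable_bound[where f="\<lambda>x. 2 * (norm (f x))\<^sup>2 + 2 * (norm (g x))\<^sup>2"])
    show "integrable M (\<lambda>x. 2 * (norm (f x))\<^sup>2 + 2 * (norm (g x))\<^sup>2)"
      using L2_integrable_norm2[OF f] L2_integrable_norm2[OF g] by simp
    show "(\<lambda>x. (norm (f x + g x))\<^sup>2) \<in> borel_measurable M" by measurable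
    show "AE x in M. norm ((norm (f x + g x))\<^sup>2) \<le> norm (2 * (norm (f x))\<^sup>2 + 2 * (norm (g x))\<^sup>2)"
    proof (rule AE_I2)
      fix x
      have t: "norm (f x + g x) \<le> norm (f x) + norm (g x)" by (rule norm_triangle_ineq)
      have "(norm (f x + g x))\<^sup>2 \<le> (norm (f x) + norm (g x))\<^sup>2"
        using t by (intro power_mono) auto
      also have "\<dots> \<le> 2 * (norm (f x))\<^sup>2 + 2 * (norm (g x))\<^sup>2"
        using sum_squares_ge_zero[of "norm (f x) - norm (g x)" 0] by (simp add: power2_eq_square algebra_simps)
      finally show "norm ((norm (f x + g x))\<^sup>2) \<le> norm (2 * (norm (f x))\<^sup>2 + 2 * (norm (g x))\<^sup>2)"
        by simp
    qed
  qed
qed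

lemma L2_scaleR:
  fixes f :: "'a \<Rightarrow> 'v::{real_inner, complete_space, second_countable_topology}"
  assumes f: "L2rv M f" shows "L2rv M (\<lambda>x. c *\<^sub>R f x)"
proof (rule L2_bound[OF f])
  show "(\<lambda>x. c *\<^sub>R f x) \<in> borel_measurable M" using L2_meas[OF f] by measurable
  show "norm (c *\<^sub>R f x) \<le> \<bar>c\<bar> * norm (f x)" for x by simp
qed

lemma L2_uminus:
  fixes f :: "'a \<Rightarrow> 'v::{real_inner, complete_space, second_countable_topology}"
  assumes f: "L2rv M f" shows "L2rv M (\<lambda>x. - f x)"
  using L2_scaleR[OF f, of "-1"] by simp

lemma L2_diff:
  fixes f g :: "'a \<Rightarrow> 'v::{real_inner, complete_space, second_countable_topology}"
  assumes f: "L2rv M f" and g: "L2rv M g"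
  shows "L2rv M (\<lambda>x. f x - g x)"
  using L2_add[OF f L2_uminus[OF g]] by simp

lemma L2_sum:
  fixes f :: "'i \<Rightarrow> 'a \<Rightarrow> 'v::{real_inner, complete_space, second_countable_topology}"
  assumes "\<And>i. i \<in> I \<Longrightarrow> L2rv M (f i)"
  shows "L2rv M (\<lambda>x. \<Sum>i\<in>I. f i x)"
  using assms
proof (induction I rule: infinite_finite_induct)
  case (infinite A) then show ?case using L2_const[of 0] by simp
next
  case empty then show ?case using L2_const[of 0] by simp
next
  case (insert i F)
  then show ?case using L2_add[of "f i" "\<lambda>x. \<Sum>i\<in>F. f i x"] by simp
qed

lemma L2_integrable_inner:
  fixes f g :: "'a \<Rightarrow> 'v::{real_inner, complete_space, second_countable_topology}"
  assumes f: "L2rv M f" and g: "L2rv M g"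
  shows "integrable M (\<lambda>x. inner (f x) (g x))"
proof (rule Bochner_Integration.integrable_bound[where f="\<lambda>x. (norm (f x))\<^sup>2 + (norm (g x))\<^sup>2"])
  have [measurable]: "f \<in> borel_measurable M" "g \<in> borel_measurable M" using f g by (simp_all add: L2rv_def)
  show "integrable M (\<lambda>x. (norm (f x))\<^sup>2 + (norm (g x))\<^sup>2)"
    using L2_integrable_norm2[OF f] L2_integrable_norm2[OF g] by simp
  show "(\<lambda>x. inner (f x) (g x)) \<in> borel_measurable M" by measurable
  show "AE x in M. norm (inner (f x) (g x)) \<le> norm ((norm (f x))\<^sup>2 + (norm (g x))\<^sup>2)"
  proof (rule AE_I2)
    fix x
    have "\<bar>inner (f x) (g x)\<bar> \<le> norm (f x) * norm (g x)" by (rule Cauchy_Schwarz_ineq2)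
    also have "\<dots> \<le> (norm (f x))\<^sup>2 + (norm (g x))\<^sup>2"
    proof -
      have a: "2 * (norm (f x) * norm (g x)) \<le> (norm (f x))\<^sup>2 + (norm (g x))\<^sup>2"
        using sum_squares_ge_zero[of "norm (f x) - norm (g x)" 0] by (simp add: power2_eq_square algebra_simps)
      have "0 \<le> norm (f x) * norm (g x)" by simp
      then show ?thesis using a by linarith
    qed
    finally show "norm (inner (f x) (g x)) \<le> norm ((norm (f x))\<^sup>2 + (norm (g x))\<^sup>2)" by simp
  qed
qed

end

context prob_space
begin

lemma CS_real:
  fixes a b :: "'a \<Rightarrow> real"
  assumes ia: "integrable M (\<lambda>x. (a x)\<^sup>2)" and ib: "integrable M (\<lambda>x. (b x)\<^sup>2)"
    and [measurable]: "a \<in> borel_measurable M" "b \<in> borel_measurable M"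
  shows "integral\<^sup>L M (\<lambda>x. a x * b x) \<le> sqrt (integral\<^sup>L M (\<lambda>x. (a x)\<^sup>2)) * sqrt (integral\<^sup>L M (\<lambda>x. (b x)\<^sup>2))"
proof -
  define A where "A = integral\<^sup>L M (\<lambda>x. (a x)\<^sup>2)"
  define B where "B = integral\<^sup>L M (\<lambda>x. (b x)\<^sup>2)"
  define X where "X = integral\<^sup>L M (\<lambda>x. a x * b x)"
  have A0: "A \<ge> 0" unfolding A_def by simp
  have B0: "B \<ge> 0" unfolding B_def by simp
  have iab: "integrable M (\<lambda>x. a x * b x)"
  proof (rule Bochner_Integration.integrable_bound[where f="\<lambda>x. (a x)\<^sup>2 + (b x)\<^sup>2"])
    show "integrable M (\<lambda>x. (a x)\<^sup>2 + (b x)\<^sup>2)" using ia ib by simp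
    show "(\<lambda>x. a x * b x) \<in> borel_measurable M" by measurable
    show "AE x in M. norm (a x * b x) \<le> norm ((a x)\<^sup>2 + (b x)\<^sup>2)"
    proof (rule AE_I2)
      fix x
      have 1: "2 * \<bar>a x\<bar> * \<bar>b x\<bar> \<le> (a x)\<^sup>2 + (b x)\<^sup>2"
        using sum_squares_ge_zero[of "\<bar>a x\<bar> - \<bar>b x\<bar>" 0] by (simp add: power2_eq_square algebra_simps)
      have 2: "0 \<le> \<bar>a x\<bar> * \<bar>b x\<bar>" by simp
      have 3: "norm (a x * b x) = \<bar>a x\<bar> * \<bar>b x\<bar>" by (simp add: abs_mult)
      have 4: "norm ((a x)\<^sup>2 + (b x)\<^sup>2) = (a x)\<^sup>2 + (b x)\<^sup>2" by simp
      show "norm (a x * b x) \<le> norm ((a x)\<^sup>2 + (b x)\<^sup>2)" unfolding 3 4 using 1 2 by linarith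
    qed
  qed
  have key: "2 * X \<le> t * A + B / t" if t: "t > 0" for t
  proof -
    have "integral\<^sup>L M (\<lambda>x. 2 * (a x * b x)) \<le> integral\<^sup>L M (\<lambda>x. t * (a x)\<^sup>2 + (b x)\<^sup>2 / t)"
    proof (rule integral_mono)
      show "integrable M (\<lambda>x. 2 * (a x * b x))" using iab by simp
      show "integrable M (\<lambda>x. t * (a x)\<^sup>2 + (b x)\<^sup>2 / t)" using ia ib by simp
      fix x
      have "0 \<le> (t * a x - b x)\<^sup>2 / t" using t by simp
      also have "(t * a x - b x)\<^sup>2 / t = t * (a x)\<^sup>2 + (b x)\<^sup>2 / t - 2 * (a x * b x)"
        using t by (simp add: power2_eq_square field_simps)
      finally show "2 * (a x * b x) \<le> t * (a x)\<^sup>2 + (b x)\<^sup>2 / t" by linarith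
    qed
    then show ?thesis unfolding X_def A_def B_def using ia ib iab by simp
  qed
  have "X \<le> sqrt A * sqrt B"
  proof (cases "A > 0 \<and> B > 0")
    case True
    then have sA: "sqrt A > 0" and sB: "sqrt B > 0" by auto
    define t where "t = sqrt B / sqrt A"
    have t0: "t > 0" unfolding t_def using sA sB by simp
    have eA: "sqrt A * sqrt A = A" using A0 by simp
    have eB: "sqrt B * sqrt B = B" using B0 by simp
    have "t * A = (sqrt B / sqrt A) * (sqrt A * sqrt A)" unfolding t_def eA ..
    also have "\<dots> = sqrt A * sqrt B" using sA by (simp add: field_simps)
    finally have 1: "t * A = sqrt A * sqrt B" .
    have "B / t = (sqrt B * sqrt B) / (sqrt B / sqrt A)" unfolding t_def eB ..
    also have "\<dots> = sqrt A * sqrt B" using sA sB by (simp add: field_simps)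
    finally have 2: "B / t = sqrt A * sqrt B" .
    show ?thesis using key[OF t0] 1 2 by linarith
  next
    case False
    then have z: "A = 0 \<or> B = 0" using A0 B0 by linarith
    have "X \<le> 0"
    proof (rule ccontr)
      assume Xp: "\<not> X \<le> 0"
      then have Xp: "X > 0" by simp
      show False
      proof (cases "A = 0")
        case True
        show False
        proof (cases "B = 0")
          case True
          with key[of 1] \<open>A = 0\<close> Xp show False by simp
        next
          case False
          then have Bp: "B > 0" using B0 by simp
          have "2 * X \<le> B / X * A + B / (B / X)" using key[of "B / X"] Bp Xp by simp
          also have "\<dots> = X" using \<open>A = 0\<close> Bp Xp by simp
          finally show False using Xp by simp
        qed
      next
        case False
        then have Ap: "A > 0" and B: "B = 0" using A0 z by auto
        have "2 * X \<le> X / A * A + B / (X / A)" using key[of "X / A"] Ap Xp by simp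
        also have "\<dots> = X" using B Ap by simp
        finally show False using Xp by simp
      qed
    qed
    moreover have "sqrt A * sqrt B \<ge> 0" using A0 B0 by simp
    ultimately show ?thesis by linarith
  qed
  then show ?thesis unfolding X_def A_def B_def .
qed

lemma L2norm_nonneg: "L2norm M f \<ge> 0"
  unfolding L2norm_def by simp

lemma jensen_v:
  fixes f :: "'a \<Rightarrow> 'v::{real_inner, complete_space, second_countable_topology}"
  assumes f: "L2rv M f"
  shows "integral\<^sup>L M (\<lambda>x. norm (f x)) \<le> L2norm M f"
proof -
  have [measurable]: "f \<in> borel_measurable M" by (rule L2_meas[OF f])
  have "integral\<^sup>L M (\<lambda>x. norm (f x) * 1) \<le> sqrt (integral\<^sup>L M (\<lambda>x. (norm (f x))\<^sup>2)) * sqrt (integral\<^sup>L M (\<lambda>x. (1::real)\<^sup>2))"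
    by (rule CS_real) (use L2_integrable_norm2[OF f] in auto)
  then show ?thesis unfolding L2norm_def by (simp add: prob_space)
qed

lemma norm_integral_L2:
  fixes f :: "'a \<Rightarrow> 'v::{real_inner, complete_space, second_countable_topology}"
  assumes f: "L2rv M f"
  shows "norm (integral\<^sup>L M f) \<le> L2norm M f"
  using integral_norm_bound_v[of M f] jensen_v[OF f] by linarith

lemma minkowski_v:
  fixes f g :: "'a \<Rightarrow> 'v::{real_inner, complete_space, second_countable_topology}"
  assumes f: "L2rv M f" and g: "L2rv M g"
  shows "L2norm M (\<lambda>x. f x - g x) \<le> L2norm M f + L2norm M g"
proof -
  have [measurable]: "f \<in> borel_measurable M" "g \<in> borel_measurable M" using f g by (simp_all add: L2rv_def)
  define A where "A = integral\<^sup>L M (\<lambda>x. (norm (f x))\<^sup>2)"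
  define B where "B = integral\<^sup>L M (\<lambda>x. (norm (g x))\<^sup>2)"
  have iA: "integrable M (\<lambda>x. (norm (f x))\<^sup>2)" by (rule L2_integrable_norm2[OF f])
  have iB: "integrable M (\<lambda>x. (norm (g x))\<^sup>2)" by (rule L2_integrable_norm2[OF g])
  have iC: "integrable M (\<lambda>x. (norm (f x - g x))\<^sup>2)" by (rule L2_integrable_norm2[OF L2_diff[OF f g]])
  have iD: "integrable M (\<lambda>x. norm (f x) * norm (g x))"
  proof (rule Bochner_Integration.integrable_bound[where f="\<lambda>x. (norm (f x))\<^sup>2 + (norm (g x))\<^sup>2"])
    show "integrable M (\<lambda>x. (norm (f x))\<^sup>2 + (norm (g x))\<^sup>2)" using iA iB by simp
    show "(\<lambda>x. norm (f x) * norm (g x)) \<in> borel_measurable M" by measurable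
    show "AE x in M. norm (norm (f x) * norm (g x)) \<le> norm ((norm (f x))\<^sup>2 + (norm (g x))\<^sup>2)"
    proof (rule AE_I2)
      fix x
      have a: "2 * (norm (f x) * norm (g x)) \<le> (norm (f x))\<^sup>2 + (norm (g x))\<^sup>2"
        using sum_squares_ge_zero[of "norm (f x) - norm (g x)" 0] by (simp add: power2_eq_square algebra_simps)
      have b: "0 \<le> norm (f x) * norm (g x)" by simp
      have 3: "norm (norm (f x) * norm (g x)) = norm (f x) * norm (g x)" by simp
      have 4: "norm ((norm (f x))\<^sup>2 + (norm (g x))\<^sup>2) = (norm (f x))\<^sup>2 + (norm (g x))\<^sup>2" by simp
      show "norm (norm (f x) * norm (g x)) \<le> norm ((norm (f x))\<^sup>2 + (norm (g x))\<^sup>2)"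
        unfolding 3 4 using a b by linarith
    qed
  qed
  have cs: "integral\<^sup>L M (\<lambda>x. norm (f x) * norm (g x)) \<le> sqrt A * sqrt B"
    unfolding A_def B_def by (rule CS_real) (use iA iB in auto)
  have "integral\<^sup>L M (\<lambda>x. (norm (f x - g x))\<^sup>2)
      \<le> integral\<^sup>L M (\<lambda>x. (norm (f x))\<^sup>2 + 2 * (norm (f x) * norm (g x)) + (norm (g x))\<^sup>2)"
  proof (rule integral_mono)
    show "integrable M (\<lambda>x. (norm (f x - g x))\<^sup>2)" by (rule iC)
    show "integrable M (\<lambda>x. (norm (f x))\<^sup>2 + 2 * (norm (f x) * norm (g x)) + (norm (g x))\<^sup>2)"
      using iA iB iD by simp
    fix x
    have t: "norm (f x - g x) \<le> norm (f x) + norm (g x)" by (rule norm_triangle_ineq4)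
    have "(norm (f x - g x))\<^sup>2 \<le> (norm (f x) + norm (g x))\<^sup>2" using t by (intro power_mono) auto
    then show "(norm (f x - g x))\<^sup>2 \<le> (norm (f x))\<^sup>2 + 2 * (norm (f x) * norm (g x)) + (norm (g x))\<^sup>2"
      by (simp add: power2_eq_square algebra_simps)
  qed
  also have "\<dots> = A + 2 * integral\<^sup>L M (\<lambda>x. norm (f x) * norm (g x)) + B"
    unfolding A_def B_def using iA iB iD by simp
  also have "\<dots> \<le> A + 2 * (sqrt A * sqrt B) + B" using cs by simp
  also have "\<dots> = (sqrt A + sqrt B)\<^sup>2"
    using A_def B_def by (simp add: power2_eq_square algebra_simps)
  finally have "integral\<^sup>L M (\<lambda>x. (norm (f x - g x))\<^sup>2) \<le> (sqrt A + sqrt B)\<^sup>2" .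
  then have "sqrt (integral\<^sup>L M (\<lambda>x. (norm (f x - g x))\<^sup>2)) \<le> sqrt ((sqrt A + sqrt B)\<^sup>2)"
    by (rule real_sqrt_le_mono)
  also have "\<dots> = sqrt A + sqrt B"
  proof -
    have "sqrt A \<ge> 0" "sqrt B \<ge> 0" unfolding A_def B_def by simp_all
    then show ?thesis by simp
  qed
  finally show ?thesis unfolding L2norm_def A_def B_def .
qed

lemma indep_inner_zero:
  fixes X Y :: "'a \<Rightarrow> 'v::{real_inner, complete_space, second_countable_topology}"
  assumes ind: "indep_var borel X borel Y" and iY: "integrable M Y"
    and iXY: "integrable M (\<lambda>\<omega>. inner (X \<omega>) (Y \<omega>))" and m0: "integral\<^sup>L M Y = 0"
  shows "integral\<^sup>L M (\<lambda>\<omega>. inner (X \<omega>) (Y \<omega>)) = 0"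
proof -
  have rvX[measurable]: "X \<in> borel_measurable M" using ind by (rule indep_var_rv1)
  have rvY[measurable]: "Y \<in> borel_measurable M" using ind by (rule indep_var_rv2)
  let ?PX = "distr M borel X" and ?PY = "distr M borel Y"
  interpret PX: prob_space ?PX by (rule prob_space_distr) (rule rvX)
  interpret PY: prob_space ?PY by (rule prob_space_distr) (rule rvY)
  interpret PXY: pair_prob_space ?PX ?PY ..
  have joint: "?PX \<Otimes>\<^sub>M ?PY = distr M (borel \<Otimes>\<^sub>M borel) (\<lambda>x. (X x, Y x))"
    using ind indep_var_distribution_eq by blast
  define f where "f = (\<lambda>p::'v \<times> 'v. inner (fst p) (snd p))"
  have fm[measurable]: "f \<in> borel_measurable (borel \<Otimes>\<^sub>M borel)" unfolding f_def by measurable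
  have XYm[measurable]: "(\<lambda>x. (X x, Y x)) \<in> measurable M (borel \<Otimes>\<^sub>M borel)" by measurable
  have int_f: "integrable (?PX \<Otimes>\<^sub>M ?PY) f" unfolding joint
    using iXY by (subst integrable_distr_eq[OF XYm fm]) (simp add: f_def)
  have iPY: "integrable ?PY (\<lambda>y. y)"
    using iY by (subst integrable_distr_eq_v) auto
  have ePY: "integral\<^sup>L ?PY (\<lambda>y. y) = 0"
    using m0 by (subst integral_distr_v) auto
  have "integral\<^sup>L M (\<lambda>\<omega>. inner (X \<omega>) (Y \<omega>)) = integral\<^sup>L (distr M (borel \<Otimes>\<^sub>M borel) (\<lambda>x. (X x, Y x))) f"
    unfolding integral_distr[OF XYm fm] by (simp add: f_def)
  also have "\<dots> = integral\<^sup>L (?PX \<Otimes>\<^sub>M ?PY) f" unfolding joint ..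
  also have "\<dots> = (\<integral>x. (\<integral>y. f (x, y) \<partial>?PY) \<partial>?PX)" using PXY.integral_fst'[OF int_f] by simp
  also have "\<dots> = (\<integral>x. inner x (integral\<^sup>L ?PY (\<lambda>y. y)) \<partial>?PX)"
    unfolding f_def using iPY by simp
  also have "\<dots> = 0" using ePY by simp
  finally show ?thesis .
qed

end

context prob_space
begin

lemma indep_vars_pair:
  assumes ind: "indep_vars (\<lambda>_. borel) Y I" and ij: "i \<in> I" "j \<in> I" "i \<noteq> j"
  shows "indep_var borel (Y i) borel (Y j)"
proof -
  have rv: "random_variable borel (Y i)" "random_variable borel (Y j)"
    using ind ij unfolding indep_vars_def by auto
  let ?G = "\<lambda>k. sigma_sets (space M) {Y k -` A \<inter> space M |A. A \<in> sets borel}"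
  have G: "indep_sets ?G I" using ind unfolding indep_vars_def by blast
  have "indep_set (?G i) (?G j)"
    unfolding indep_sets2_eq
  proof (intro conjI ballI)
    show "?G i \<subseteq> events" using G ij unfolding indep_sets_def by blast
    show "?G j \<subseteq> events" using G ij unfolding indep_sets_def by blast
    fix a b assume a: "a \<in> ?G i" and b: "b \<in> ?G j"
    define F where "F k = (if k = i then a else b)" for k
    have FP: "F \<in> Pi {i, j} ?G" using a b ij by (auto simp: F_def)
    have J: "{i, j} \<subseteq> I" "{i, j} \<noteq> {}" "finite {i, j}" using ij by auto
    have "prob (\<Inter>k\<in>{i, j}. F k) = (\<Prod>k\<in>{i, j}. prob (F k))"
      using G J FP unfolding indep_sets_def by blast
    then show "prob (a \<inter> b) = prob a * prob b" using ij by (simp add: F_def Int_commute)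
  qed
  then show ?thesis unfolding indep_var_eq using rv by simp
qed

lemma same_distr_integral:
  fixes X Y :: "'a \<Rightarrow> 'v::{real_normed_vector, second_countable_topology}"
    and g :: "'v \<Rightarrow> 'c::{real_normed_vector, complete_space, second_countable_topology}"
  assumes [measurable]: "X \<in> borel_measurable M" "Y \<in> borel_measurable M" "g \<in> borel_measurable borel"
    and d: "distr M borel X = distr M borel Y"
  shows "integral\<^sup>L M (\<lambda>x. g (X x)) = integral\<^sup>L M (\<lambda>x. g (Y x))"
proof -
  have "integral\<^sup>L M (\<lambda>x. g (X x)) = integral\<^sup>L (distr M borel X) g" by (rule integral_distr_v[symmetric]) measurable
  also have "\<dots> = integral\<^sup>L (distr M borel Y) g" unfolding d ..
  also have "\<dots> = integral\<^sup>L M (\<lambda>x. g (Y x))" by (rule integral_distr_v) measurable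
  finally show ?thesis .
qed

lemma same_distr_integrable:
  fixes X Y :: "'a \<Rightarrow> 'v::{real_normed_vector, second_countable_topology}"
    and g :: "'v \<Rightarrow> 'c::{real_normed_vector, complete_space, second_countable_topology}"
  assumes [measurable]: "X \<in> borel_measurable M" "Y \<in> borel_measurable M" "g \<in> borel_measurable borel"
    and d: "distr M borel X = distr M borel Y" and i: "integrable M (\<lambda>x. g (Y x))"
  shows "integrable M (\<lambda>x. g (X x))"
proof -
  have "integrable (distr M borel Y) g" using i by (subst integrable_distr_eq_v) auto
  then have "integrable (distr M borel X) g" unfolding d .
  then show ?thesis by (subst (asm) integrable_distr_eq_v) auto
qed

lemma same_distr_L2:
  fixes X Y :: "'a \<Rightarrow> 'v::{real_inner, complete_space, second_countable_topology}"
  assumes X: "X \<in> borel_measurable M" and Y: "L2rv M Y" and d: "distr M borel X = distr M borel Y"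
  shows "L2rv M X"
  unfolding L2rv_def
proof
  show "X \<in> borel_measurable M" by fact
  show "integrable M (\<lambda>x. (norm (X x))\<^sup>2)"
    by (rule same_distr_integrable[OF X L2_meas[OF Y] _ d, where g="\<lambda>x. (norm x)\<^sup>2"])
       (use L2_integrable_norm2[OF Y] in auto)
qed

end

lemma telescope:
  fixes f :: "nat \<Rightarrow> 'v::ab_group_add"
  assumes "n \<ge> 1"
  shows "(\<Sum>l = 1..n. f l - (if l = 1 then 0 else f (l - 1))) = f n"
  using assms
proof (induction n rule: dec_induct)
  case base then show ?case by simp
next
  case (step n)
  have "(\<Sum>l = 1..Suc n. f l - (if l = 1 then 0 else f (l - 1)))
      = (\<Sum>l = 1..n. f l - (if l = 1 then 0 else f (l - 1))) + (f (Suc n) - f n)"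
    using step(1) by simp
  then show ?case using step(3) by simp
qed

lemma final_arith:
  fixes s a e :: "nat \<Rightarrow> real" and U :: real and L :: nat
  assumes L: "L \<ge> 2" and s0: "\<And>l. 0 \<le> s l" and e0: "\<And>l. 0 \<le> e l" and U0: "0 \<le> U"
    and a: "\<And>l. l \<in> {1..L} \<Longrightarrow> a l \<le> e l + (if l = 1 then U else e (l - 1))"
  shows "(\<Sum>l = 1..L. s l * a l) + e L + (\<Sum>l = 1..L. (if l = 1 then 0 else 1) * a l)
     \<le> (s 1 + 2 * (\<Sum>l = 2..L. s l)) * U
        + (\<Sum>l = 1..L. (if l = 1 then 1 + s 1 + 2 * s 2
                         else if l = L then 2 + 2 * s L
                         else 2 + 2 * s l + 2 * s (l + 1)) * e l)"
proof -
  define c where "c l = s l + (if l = 1 then 0 else 1)" for l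
  have c0: "0 \<le> c l" for l using s0[of l] by (simp add: c_def)
  have "(\<Sum>l = 1..L. s l * a l) + (\<Sum>l = 1..L. (if l = 1 then 0 else 1) * a l) = (\<Sum>l = 1..L. c l * a l)"
    by (simp add: c_def sum.distrib[symmetric] algebra_simps)
  also have "\<dots> \<le> (\<Sum>l = 1..L. c l * (e l + (if l = 1 then U else e (l - 1))))"
    by (intro sum_mono mult_left_mono a c0)
  also have "\<dots> = (\<Sum>l = 1..L. c l * e l) + (\<Sum>l = 1..L. c l * (if l = 1 then U else e (l - 1)))"
    by (simp add: sum.distrib algebra_simps)
  also have "(\<Sum>l = 1..L. c l * (if l = 1 then U else e (l - 1)))
      = c 1 * U + (\<Sum>l = 2..L. c l * e (l - 1))"
  proof -
    have "{1..L} = insert 1 {2..L}" using L by auto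
    then show ?thesis by (simp add: sum.insert_remove)
  qed
  also have "(\<Sum>l = 2..L. c l * e (l - 1)) = (\<Sum>l = 1..L - 1. c (Suc l) * e l)"
  proof -
    have "(\<Sum>l = Suc 1..Suc (L - 1). c l * e (l - 1)) = (\<Sum>l = 1..L - 1. c (Suc l) * e (Suc l - 1))"
      by (rule sum.shift_bounds_cl_Suc_ivl)
    moreover have "Suc (L - 1) = L" using L by simp
    ultimately show ?thesis by (simp add: numeral_2_eq_2)
  qed
  finally have lhs: "(\<Sum>l = 1..L. s l * a l) + e L + (\<Sum>l = 1..L. (if l = 1 then 0 else 1) * a l)
      \<le> c 1 * U + ((\<Sum>l = 1..L. c l * e l) + (\<Sum>l = 1..L - 1. c (Suc l) * e l) + e L)"
    by linarith
  have split: "(\<Sum>l = 1..L. g l) = (\<Sum>l = 1..L - 1. g l) + g L" for g :: "nat \<Rightarrow> real"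
  proof -
    have "{1..L} = insert L {1..L - 1}" using L by auto
    moreover have "L \<notin> {1..L - 1}" using L by auto
    ultimately show ?thesis by (simp add: add.commute)
  qed
  define cc where "cc l = (if l = 1 then 1 + s 1 + 2 * s 2
                         else if l = L then 2 + 2 * s L
                         else 2 + 2 * s l + 2 * s (l + 1))" for l
  have "(\<Sum>l = 1..L. c l * e l) + (\<Sum>l = 1..L - 1. c (Suc l) * e l) + e L
      = (\<Sum>l = 1..L - 1. (c l + c (Suc l)) * e l) + (c L + 1) * e L"
    unfolding split[of "\<lambda>l. c l * e l"] by (simp add: sum.distrib algebra_simps)
  also have "\<dots> \<le> (\<Sum>l = 1..L - 1. cc l * e l) + cc L * e L"
  proof (intro add_mono sum_mono mult_right_mono e0)
    fix l assume l: "l \<in> {1..L - 1}"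
    show "c l + c (Suc l) \<le> cc l"
    proof (cases "l = 1")
      case True then show ?thesis using s0[of 2] by (simp add: c_def cc_def numeral_2_eq_2)
    next
      case False
      then have "l \<noteq> L" "l \<noteq> 1" "l \<noteq> 0" using l by auto
      then show ?thesis using s0[of l] s0[of "Suc l"] by (simp add: c_def cc_def)
    qed
  next
    show "c L + 1 \<le> cc L" using L s0[of L] by (simp add: c_def cc_def)
  qed
  also have "\<dots> = (\<Sum>l = 1..L. cc l * e l)" unfolding split[of "\<lambda>l. cc l * e l"] ..
  finally have r: "(\<Sum>l = 1..L. c l * e l) + (\<Sum>l = 1..L - 1. c (Suc l) * e l) + e L \<le> (\<Sum>l = 1..L. cc l * e l)" .
  have "c 1 * U \<le> (s 1 + 2 * (\<Sum>l = 2..L. s l)) * U"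
  proof (rule mult_right_mono[OF _ U0])
    have "0 \<le> (\<Sum>l = 2..L. s l)" by (intro sum_nonneg s0)
    then show "c 1 \<le> s 1 + 2 * (\<Sum>l = 2..L. s l)" by (simp add: c_def)
  qed
  with lhs r show ?thesis unfolding cc_def by linarith
qed

lemma (in prob_space) integral_const_v:
  fixes c :: "'v::{real_normed_vector, complete_space, second_countable_topology}"
  shows "integral\<^sup>L M (\<lambda>x. c) = c"
proof -
  have "integral\<^sup>L M (\<lambda>x. (c, 0::'v)) = (integral\<^sup>L M (\<lambda>x. c), 0)" by (rule integral_emb)
  moreover have "integral\<^sup>L M (\<lambda>x. (c, 0::'v)) = (c, 0)"
    by (simp add: prob_space)
  ultimately show ?thesis by simp
qed

theorem theorem1:
  fixes M :: "'w measure"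
    and V :: "nat \<Rightarrow> 'v::{real_inner, complete_space, second_countable_topology} set"
    and L :: nat and N :: "nat \<Rightarrow> nat"
    and u :: "'w \<Rightarrow> 'v" and ul :: "nat \<Rightarrow> 'w \<Rightarrow> 'v"
    and Xs :: "nat \<Rightarrow> nat \<Rightarrow> 'w \<Rightarrow> 'v"
  assumes "prob_space M"
    and "L \<ge> 2"
    and "\<And>l. l \<in> {1..L} \<Longrightarrow> N l > 0"
    and "\<And>l. l \<in> {1..L} \<Longrightarrow> subspace (V l) \<and> closed (V l)"
    and "\<And>l. l \<in> {1..<L} \<Longrightarrow> V l \<subseteq> V (Suc l)"
    and "L2rv M u"
    and "\<And>l. l \<in> {1..L} \<Longrightarrow> L2rv M (ul l) \<and> (\<forall>\<omega>\<in>space M. ul l \<omega> \<in> V l)"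
    and "\<And>l k. l \<in> {1..L} \<Longrightarrow> k \<in> {1..N l} \<Longrightarrow>
           Xs l k \<in> borel_measurable M \<and> distr M borel (Xs l k) = distr M borel (ul l)"
    and "prob_space.indep_vars M (\<lambda>_. borel) (\<lambda>(l, k). Xs l k)
           {(l, k). l \<in> {1..L} \<and> k \<in> {1..N l}}"
  shows "sqrt (integral\<^sup>L M (\<lambda>\<omega>. (norm (E_PML V L N Xs \<omega> - integral\<^sup>L M u))\<^sup>2))
           \<le> c0 L N * L2norm M u + (\<Sum>l = 1..L. cl L N l * L2norm M (\<lambda>\<omega>. u \<omega> - ul l \<omega>))"
proof -
  interpret prob_space M by (rule assms(1))
  have L2: "L \<ge> 2" by (rule assms(2))
  have Npos: "real (N l) > 0" if "l \<in> {1..L}" for l using assms(3)[OF that] by simp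
  have Pg: "Pgood V l" if "l \<in> {1..L}" for l
  proof (cases "l \<le> 1")
    case True then show ?thesis by (simp add: Pgood_def)
  next
    case False
    then have "l - 1 \<in> {1..L}" using that by auto
    then show ?thesis using assms(4)[of "l - 1"] by (simp add: Pgood_def)
  qed
  have uL2: "L2rv M u" by (rule assms(6))
  have ulL2: "L2rv M (ul l)" if "l \<in> {1..L}" for l using assms(7)[OF that] by blast
  have ulV: "ul l \<omega> \<in> V l" if "l \<in> {1..L}" "\<omega> \<in> space M" for l \<omega> using assms(7)[OF that(1)] that(2) by blast
  have Xm: "Xs l k \<in> borel_measurable M" if "l \<in> {1..L}" "k \<in> {1..N l}" for l k
    using assms(8)[OF that] by blast
  have Xd: "distr M borel (Xs l k) = distr M borel (ul l)" if "l \<in> {1..L}" "k \<in> {1..N l}" for l k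
    using assms(8)[OF that] by blast
  have XL2: "L2rv M (Xs l k)" if "l \<in> {1..L}" "k \<in> {1..N l}" for l k
    by (rule same_distr_L2[OF Xm[OF that] ulL2[OF that(1)] Xd[OF that]])

  define uprev where "uprev l \<omega> = (if l = 1 then 0 else ul (l - 1) \<omega>)" for l \<omega>
  define Zf where "Zf l x = x - Pproj V l x" for l x
  have Zm: "Zf l \<in> borel_measurable borel" if "l \<in> {1..L}" for l
  proof -
    have [measurable]: "Pproj V l \<in> borel_measurable borel" by (rule Pproj_meas[OF Pg[OF that]])
    show ?thesis unfolding Zf_def by measurable
  qed
  have Zn: "norm (Zf l x) \<le> 2 * norm x" if "l \<in> {1..L}" for l x
  proof -
    have "norm (Zf l x) \<le> norm x + norm (Pproj V l x)" unfolding Zf_def by (rule norm_triangle_ineq4)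
    then show ?thesis using Pproj_norm[OF Pg[OF that], of x] by linarith
  qed
  have ZL2: "L2rv M (\<lambda>\<omega>. Zf l (Y \<omega>))" if "l \<in> {1..L}" "L2rv M Y" for l Y
  proof (rule L2_bound[OF that(2)])
    show "(\<lambda>\<omega>. Zf l (Y \<omega>)) \<in> borel_measurable M"
      using measurable_compose[OF L2_meas[OF that(2)] Zm[OF that(1)]] by (simp add: comp_def)
    show "norm (Zf l (Y x)) \<le> 2 * norm (Y x)" for x by (rule Zn[OF that(1)])
  qed
  define m where "m l = integral\<^sup>L M (\<lambda>\<omega>. Zf l (ul l \<omega>))" for l
  have EZX: "integral\<^sup>L M (\<lambda>\<omega>. Zf l (Xs l k \<omega>)) = m l" if "l \<in> {1..L}" "k \<in> {1..N l}" for l k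
    unfolding m_def
    by (rule same_distr_integral[OF Xm[OF that] L2_meas[OF ulL2[OF that(1)]] Zm[OF that(1)] Xd[OF that]])
  define I where "I = Sigma {1..L} (\<lambda>l. {1..N l})"
  have finI: "finite I" unfolding I_def by simp
  have Ifst: "fst i \<in> {1..L}" "snd i \<in> {1..N (fst i)}" if "i \<in> I" for i
    using that unfolding I_def by auto
  define D where "D i \<omega> = Zf (fst i) (Xs (fst i) (snd i) \<omega>) - m (fst i)" for i \<omega>
  have DL2: "L2rv M (D i)" if "i \<in> I" for i
  proof -
    have "L2rv M (\<lambda>\<omega>. Zf (fst i) (Xs (fst i) (snd i) \<omega>) - m (fst i))"
      by (rule L2_diff[OF ZL2[OF Ifst(1)[OF that] XL2[OF Ifst[OF that]]] L2_const])
    then show ?thesis unfolding D_def by (simp add: fun_eq_iff)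
  qed
  have ED: "integral\<^sup>L M (D i) = 0" if "i \<in> I" for i
  proof -
    have "integral\<^sup>L M (D i) = integral\<^sup>L M (\<lambda>\<omega>. Zf (fst i) (Xs (fst i) (snd i) \<omega>)) - integral\<^sup>L M (\<lambda>\<omega>. m (fst i))"
      unfolding D_def
      by (rule Bochner_Integration.integral_diff[OF L2_integrable[OF ZL2[OF Ifst(1)[OF that] XL2[OF Ifst[OF that]]]] L2_integrable[OF L2_const]])
    also have "\<dots> = 0" using EZX[OF Ifst[OF that]] integral_const_v[of "m (fst i)"] by simp
    finally show ?thesis .
  qed
  define w where "w i = 1 / real (N (fst i))" for i :: "nat \<times> nat"
  define A where "A \<omega> = (\<Sum>i\<in>I. w i *\<^sub>R D i \<omega>)" for \<omega>
  define b where "b = (\<Sum>l = 1..L. m l) - integral\<^sup>L M u"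
  have decomp: "E_PML V L N Xs \<omega> - integral\<^sup>L M u = A \<omega> + b" for \<omega>
  proof -
    have "E_PML V L N Xs \<omega> = (\<Sum>l = 1..L. (1 / real (N l)) *\<^sub>R (\<Sum>k = 1..N l. D (l, k) \<omega>) + m l)"
      unfolding E_PML_def
    proof (rule sum.cong[OF refl])
      fix l assume l: "l \<in> {1..L}"
      have "(\<Sum>k = 1..N l. Xs l k \<omega> - Pproj V l (Xs l k \<omega>)) = (\<Sum>k = 1..N l. D (l, k) \<omega> + m l)"
        by (simp add: D_def Zf_def)
      also have "\<dots> = (\<Sum>k = 1..N l. D (l, k) \<omega>) + real (N l) *\<^sub>R m l"
        by (simp add: sum.distrib sum_constant_scaleR)
      finally show "(1 / real (N l)) *\<^sub>R (\<Sum>k = 1..N l. Xs l k \<omega> - Pproj V l (Xs l k \<omega>))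
          = (1 / real (N l)) *\<^sub>R (\<Sum>k = 1..N l. D (l, k) \<omega>) + m l"
        using Npos[OF l] by (simp add: scaleR_add_right)
    qed
    also have "\<dots> = (\<Sum>l = 1..L. (1 / real (N l)) *\<^sub>R (\<Sum>k = 1..N l. D (l, k) \<omega>)) + (\<Sum>l = 1..L. m l)"
      by (rule sum.distrib)
    also have "(\<Sum>l = 1..L. (1 / real (N l)) *\<^sub>R (\<Sum>k = 1..N l. D (l, k) \<omega>)) = A \<omega>"
    proof -
      have "(\<Sum>l = 1..L. (1 / real (N l)) *\<^sub>R (\<Sum>k = 1..N l. D (l, k) \<omega>))
          = (\<Sum>l = 1..L. \<Sum>k = 1..N l. w (l, k) *\<^sub>R D (l, k) \<omega>)"
        by (simp add: scaleR_sum_right w_def)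
      also have "\<dots> = (\<Sum>(l, k)\<in>I. w (l, k) *\<^sub>R D (l, k) \<omega>)"
        unfolding I_def by (rule sum.Sigma) auto
      also have "\<dots> = A \<omega>" unfolding A_def by (simp add: split_def)
      finally show ?thesis .
    qed
    finally show ?thesis unfolding b_def by simp
  qed
  have iD: "integrable M (D i)" if "i \<in> I" for i by (rule L2_integrable[OF DL2[OF that]])
  have AL2: "L2rv M A"
  proof -
    have "L2rv M (\<lambda>\<omega>. \<Sum>i\<in>I. w i *\<^sub>R D i \<omega>)"
      by (rule L2_sum) (rule L2_scaleR[OF DL2])
    then show ?thesis unfolding A_def .
  qed
  have EA: "integral\<^sup>L M A = 0"
  proof -
    have "integral\<^sup>L M A = (\<Sum>i\<in>I. integral\<^sup>L M (\<lambda>\<omega>. w i *\<^sub>R D i \<omega>))"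
      unfolding A_def by (rule Bochner_Integration.integral_sum) (simp add: iD)
    also have "\<dots> = (\<Sum>i\<in>I. w i *\<^sub>R integral\<^sup>L M (D i))" by simp
    also have "\<dots> = 0" by (simp add: ED)
    finally show ?thesis .
  qed
  have main_eq: "integral\<^sup>L M (\<lambda>\<omega>. (norm (A \<omega> + b))\<^sup>2) = integral\<^sup>L M (\<lambda>\<omega>. (norm (A \<omega>))\<^sup>2) + (norm b)\<^sup>2"
  proof -
    have pw: "(norm (A \<omega> + b))\<^sup>2 = (norm (A \<omega>))\<^sup>2 + 2 * inner (A \<omega>) b + (norm b)\<^sup>2" for \<omega>
      unfolding power2_norm_eq_inner by (simp add: inner_add_left inner_add_right inner_commute[of b "A \<omega>"])
    have i1: "integrable M (\<lambda>\<omega>. (norm (A \<omega>))\<^sup>2)" by (rule L2_integrable_norm2[OF AL2])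
    have i2: "integrable M (\<lambda>\<omega>. inner (A \<omega>) b)" by (rule L2_integrable_inner[OF AL2 L2_const])
    have e2: "integral\<^sup>L M (\<lambda>\<omega>. inner (A \<omega>) b) = 0"
      using integral_inner_left[of b M A] L2_integrable[OF AL2] EA by simp
    have "integral\<^sup>L M (\<lambda>\<omega>. (norm (A \<omega> + b))\<^sup>2)
        = integral\<^sup>L M (\<lambda>\<omega>. (norm (A \<omega>))\<^sup>2 + 2 * inner (A \<omega>) b + (norm b)\<^sup>2)"
      by (simp only: pw)
    also have "\<dots> = integral\<^sup>L M (\<lambda>\<omega>. (norm (A \<omega>))\<^sup>2) + 2 * integral\<^sup>L M (\<lambda>\<omega>. inner (A \<omega>) b) + (norm b)\<^sup>2"
      using i1 i2 by (simp add: prob_space)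
    finally show ?thesis using e2 by simp
  qed
  have indX: "indep_vars (\<lambda>_. borel) (\<lambda>(l, k). Xs l k) I"
  proof -
    have "{(l, k). l \<in> {1..L} \<and> k \<in> {1..N l}} = I" unfolding I_def by auto
    then show ?thesis using assms(9) by simp
  qed
  have indD: "indep_vars (\<lambda>_. borel) D I"
  proof -
    have "indep_vars (\<lambda>_. borel) (\<lambda>i x. (\<lambda>v. Zf (fst i) v - m (fst i)) ((\<lambda>(l, k). Xs l k) i x)) I"
    proof (rule indep_vars_compose2[OF indX])
      fix i assume i: "i \<in> I"
      have [measurable]: "Zf (fst i) \<in> borel_measurable borel" by (rule Zm[OF Ifst(1)[OF i]])
      show "(\<lambda>v. Zf (fst i) v - m (fst i)) \<in> borel \<rightarrow>\<^sub>M borel" by measurable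
    qed
    moreover have "(\<lambda>i x. (\<lambda>v. Zf (fst i) v - m (fst i)) ((\<lambda>(l, k). Xs l k) i x)) = D"
      by (auto simp: D_def fun_eq_iff split: prod.split)
    ultimately show ?thesis by simp
  qed
  have cross: "integral\<^sup>L M (\<lambda>\<omega>. inner (D i \<omega>) (D j \<omega>)) = 0" if "i \<in> I" "j \<in> I" "i \<noteq> j" for i j
    by (rule indep_inner_zero[OF indep_vars_pair[OF indD that] iD[OF that(2)]
          L2_integrable_inner[OF DL2[OF that(1)] DL2[OF that(2)]] ED[OF that(2)]])
  have varA: "integral\<^sup>L M (\<lambda>\<omega>. (norm (A \<omega>))\<^sup>2) = (\<Sum>i\<in>I. (w i)\<^sup>2 * integral\<^sup>L M (\<lambda>\<omega>. (norm (D i \<omega>))\<^sup>2))"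
  proof -
    have pw: "(norm (A \<omega>))\<^sup>2 = (\<Sum>i\<in>I. \<Sum>j\<in>I. (w i * w j) * inner (D j \<omega>) (D i \<omega>))" for \<omega>
      unfolding A_def power2_norm_eq_inner
      by (simp add: inner_sum_left inner_sum_right sum_distrib_left mult.assoc)
    have ii: "integrable M (\<lambda>\<omega>. (w i * w j) * inner (D j \<omega>) (D i \<omega>))" if "i \<in> I" "j \<in> I" for i j
      using L2_integrable_inner[OF DL2[OF that(2)] DL2[OF that(1)]] by simp
    have "integral\<^sup>L M (\<lambda>\<omega>. (norm (A \<omega>))\<^sup>2)
        = integral\<^sup>L M (\<lambda>\<omega>. \<Sum>i\<in>I. \<Sum>j\<in>I. (w i * w j) * inner (D j \<omega>) (D i \<omega>))"
      by (simp only: pw)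
    also have "\<dots> = (\<Sum>i\<in>I. integral\<^sup>L M (\<lambda>\<omega>. \<Sum>j\<in>I. (w i * w j) * inner (D j \<omega>) (D i \<omega>)))"
      by (rule Bochner_Integration.integral_sum) (intro Bochner_Integration.integrable_sum ii)
    also have "\<dots> = (\<Sum>i\<in>I. \<Sum>j\<in>I. integral\<^sup>L M (\<lambda>\<omega>. (w i * w j) * inner (D j \<omega>) (D i \<omega>)))"
      by (intro sum.cong refl Bochner_Integration.integral_sum ii)
    also have "\<dots> = (\<Sum>i\<in>I. \<Sum>j\<in>I. (w i * w j) * integral\<^sup>L M (\<lambda>\<omega>. inner (D j \<omega>) (D i \<omega>)))"
      by simp
    also have "\<dots> = (\<Sum>i\<in>I. (w i)\<^sup>2 * integral\<^sup>L M (\<lambda>\<omega>. (norm (D i \<omega>))\<^sup>2))"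
    proof (rule sum.cong[OF refl])
      fix i assume i: "i \<in> I"
      have "(\<Sum>j\<in>I. (w i * w j) * integral\<^sup>L M (\<lambda>\<omega>. inner (D j \<omega>) (D i \<omega>)))
          = (w i * w i) * integral\<^sup>L M (\<lambda>\<omega>. inner (D i \<omega>) (D i \<omega>))
            + (\<Sum>j\<in>I - {i}. (w i * w j) * integral\<^sup>L M (\<lambda>\<omega>. inner (D j \<omega>) (D i \<omega>)))"
        using finI i by (rule sum.remove)
      also have "(\<Sum>j\<in>I - {i}. (w i * w j) * integral\<^sup>L M (\<lambda>\<omega>. inner (D j \<omega>) (D i \<omega>))) = 0"
        using cross[of _ i] i by (intro sum.neutral) auto
      finally show "(\<Sum>j\<in>I. (w i * w j) * integral\<^sup>L M (\<lambda>\<omega>. inner (D j \<omega>) (D i \<omega>)))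
          = (w i)\<^sup>2 * integral\<^sup>L M (\<lambda>\<omega>. (norm (D i \<omega>))\<^sup>2)"
        unfolding power2_norm_eq_inner by (simp add: power2_eq_square)
    qed
    finally show ?thesis .
  qed
  define q where "q l = integral\<^sup>L M (\<lambda>\<omega>. (norm (ul l \<omega> - uprev l \<omega>))\<^sup>2)" for l
  define a where "a l = L2norm M (\<lambda>\<omega>. ul l \<omega> - uprev l \<omega>)" for l
  have uprevL2: "L2rv M (uprev l)" if "l \<in> {1..L}" for l
  proof (cases "l = 1")
    case True
    then have "uprev l = (\<lambda>\<omega>. 0)" by (simp add: uprev_def fun_eq_iff)
    then show ?thesis using L2_const[of 0] by simp
  next
    case False
    then have "l - 1 \<in> {1..L}" using that by auto
    moreover have "uprev l = ul (l - 1)" using False by (simp add: uprev_def fun_eq_iff)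
    ultimately show ?thesis using ulL2 by simp
  qed
  have dL2: "L2rv M (\<lambda>\<omega>. ul l \<omega> - uprev l \<omega>)" if "l \<in> {1..L}" for l
    by (rule L2_diff[OF ulL2[OF that] uprevL2[OF that]])
  have qa: "q l = (a l)\<^sup>2" for l
  proof -
    have "0 \<le> q l" unfolding q_def by simp
    then show ?thesis unfolding a_def L2norm_def q_def by simp
  qed
  have a0: "0 \<le> a l" for l unfolding a_def by (rule L2norm_nonneg)
  have ZvsU: "norm (Zf l (ul l \<omega>)) \<le> norm (ul l \<omega> - uprev l \<omega>)" if l: "l \<in> {1..L}" and om: "\<omega> \<in> space M" for l \<omega>
  proof (cases "l = 1")
    case True then show ?thesis by (simp add: Zf_def uprev_def Pproj_def)
  next
    case False
    then have l2: "l \<ge> 2" and l1: "l - 1 \<in> {1..L}" using l by auto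
    have "norm (ul l \<omega> - Pproj V l (ul l \<omega>)) \<le> norm (ul l \<omega> - ul (l - 1) \<omega>)"
      by (rule Pproj_best(1)[OF Pg[OF l] l2 ulV[OF l1 om]])
    then show ?thesis using False by (simp add: Zf_def uprev_def)
  qed
  have DvsQ: "integral\<^sup>L M (\<lambda>\<omega>. (norm (D i \<omega>))\<^sup>2) \<le> q (fst i)" if i: "i \<in> I" for i
  proof -
    define l where "l = fst i"
    define k where "k = snd i"
    have l: "l \<in> {1..L}" and k: "k \<in> {1..N l}" using Ifst[OF i] by (simp_all add: l_def k_def)
    define Z where "Z \<omega> = Zf l (Xs l k \<omega>)" for \<omega>
    have ZL2': "L2rv M Z" unfolding Z_def by (rule ZL2[OF l XL2[OF l k]])
    have EZ: "integral\<^sup>L M Z = m l" unfolding Z_def by (rule EZX[OF l k])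
    have Deq: "D i \<omega> = Z \<omega> - m l" for \<omega> by (simp add: D_def Z_def l_def k_def)
    have pw: "(norm (Z \<omega> - m l))\<^sup>2 = (norm (Z \<omega>))\<^sup>2 - 2 * inner (Z \<omega>) (m l) + (norm (m l))\<^sup>2" for \<omega>
      unfolding power2_norm_eq_inner
      by (simp add: inner_diff_left inner_diff_right inner_commute[of "m l" "Z \<omega>"])
    have i1: "integrable M (\<lambda>\<omega>. (norm (Z \<omega>))\<^sup>2)" by (rule L2_integrable_norm2[OF ZL2'])
    have i2: "integrable M (\<lambda>\<omega>. inner (Z \<omega>) (m l))" by (rule L2_integrable_inner[OF ZL2' L2_const])
    have e2: "integral\<^sup>L M (\<lambda>\<omega>. inner (Z \<omega>) (m l)) = (norm (m l))\<^sup>2"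
      using integral_inner_left[of "m l" M Z] L2_integrable[OF ZL2'] EZ by (simp add: power2_norm_eq_inner)
    have "integral\<^sup>L M (\<lambda>\<omega>. (norm (D i \<omega>))\<^sup>2)
        = integral\<^sup>L M (\<lambda>\<omega>. (norm (Z \<omega>))\<^sup>2 - 2 * inner (Z \<omega>) (m l) + (norm (m l))\<^sup>2)"
      by (simp only: Deq pw)
    also have "\<dots> = integral\<^sup>L M (\<lambda>\<omega>. (norm (Z \<omega>))\<^sup>2) - 2 * integral\<^sup>L M (\<lambda>\<omega>. inner (Z \<omega>) (m l)) + (norm (m l))\<^sup>2"
      using i1 i2 by (simp add: prob_space)
    also have "\<dots> \<le> integral\<^sup>L M (\<lambda>\<omega>. (norm (Z \<omega>))\<^sup>2)" using e2 by simp
    also have "integral\<^sup>L M (\<lambda>\<omega>. (norm (Z \<omega>))\<^sup>2) = integral\<^sup>L M (\<lambda>\<omega>. (norm (Zf l (ul l \<omega>)))\<^sup>2)"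
    proof -
      have [measurable]: "Zf l \<in> borel_measurable borel" by (rule Zm[OF l])
      show ?thesis unfolding Z_def
        by (rule same_distr_integral[OF Xm[OF l k] L2_meas[OF ulL2[OF l]] _ Xd[OF l k], where g="\<lambda>x. (norm (Zf l x))\<^sup>2"])
           measurable
    qed
    also have "\<dots> \<le> q l" unfolding q_def
    proof (rule integral_mono)
      show "integrable M (\<lambda>\<omega>. (norm (Zf l (ul l \<omega>)))\<^sup>2)" by (rule L2_integrable_norm2[OF ZL2[OF l ulL2[OF l]]])
      show "integrable M (\<lambda>\<omega>. (norm (ul l \<omega> - uprev l \<omega>))\<^sup>2)" by (rule L2_integrable_norm2[OF dL2[OF l]])
      fix \<omega> assume "\<omega> \<in> space M"
      from ZvsU[OF l this] show "(norm (Zf l (ul l \<omega>)))\<^sup>2 \<le> (norm (ul l \<omega> - uprev l \<omega>))\<^sup>2"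
        by (intro power_mono) auto
    qed
    finally show ?thesis unfolding l_def .
  qed
  have varA_bd: "integral\<^sup>L M (\<lambda>\<omega>. (norm (A \<omega>))\<^sup>2) \<le> (\<Sum>l = 1..L. q l / real (N l))"
  proof -
    have "integral\<^sup>L M (\<lambda>\<omega>. (norm (A \<omega>))\<^sup>2) \<le> (\<Sum>i\<in>I. (w i)\<^sup>2 * q (fst i))"
      unfolding varA by (intro sum_mono mult_left_mono DvsQ) auto
    also have "\<dots> = (\<Sum>l = 1..L. \<Sum>k = 1..N l. (w (l, k))\<^sup>2 * q l)"
      unfolding I_def by (subst sum.Sigma) (auto simp: split_def)
    also have "\<dots> = (\<Sum>l = 1..L. q l / real (N l))"
    proof (rule sum.cong[OF refl])
      fix l assume l: "l \<in> {1..L}"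
      have "(\<Sum>k = 1..N l. (w (l, k))\<^sup>2 * q l) = real (N l) * ((1 / real (N l))\<^sup>2 * q l)"
        by (simp add: w_def)
      also have "\<dots> = q l / real (N l)" using Npos[OF l] by (simp add: power2_eq_square)
      finally show "(\<Sum>k = 1..N l. (w (l, k))\<^sup>2 * q l) = q l / real (N l)" .
    qed
    finally show ?thesis .
  qed
  define s where "s l = 1 / sqrt (real (N l))" for l
  have s0: "0 \<le> s l" for l unfolding s_def by simp
  have sq_bd: "sqrt (\<Sum>l = 1..L. q l / real (N l)) \<le> (\<Sum>l = 1..L. s l * a l)"
  proof -
    have "(\<Sum>l = 1..L. q l / real (N l)) = (\<Sum>l = 1..L. (s l * a l)\<^sup>2)"
    proof (rule sum.cong[OF refl])
      fix l assume l: "l \<in> {1..L}"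
      show "q l / real (N l) = (s l * a l)\<^sup>2"
        using Npos[OF l] unfolding qa s_def by (simp add: power_mult_distrib power_divide)
    qed
    then have "sqrt (\<Sum>l = 1..L. q l / real (N l)) = L2_set (\<lambda>l. s l * a l) {1..L}"
      unfolding L2_set_def by simp
    also have "\<dots> \<le> (\<Sum>l = 1..L. s l * a l)"
      by (rule L2_set_le_sum) (simp add: s0 a0)
    finally show ?thesis .
  qed
  define e where "e l = L2norm M (\<lambda>\<omega>. u \<omega> - ul l \<omega>)" for l
  define U where "U = L2norm M u"
  define cf where "cf l = (if l = 1 then 0 else 1::real)" for l :: nat
  have cf0: "0 \<le> cf l" for l by (simp add: cf_def)
  have L1: "L \<in> {1..L}" using L2 by simp
  define g where "g \<omega> = (ul L \<omega> - u \<omega>) + (\<Sum>l = 1..L. uprev l \<omega> - Pproj V l (ul l \<omega>))" for \<omega>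
  have ZuL2: "L2rv M (\<lambda>\<omega>. Zf l (ul l \<omega>))" if "l \<in> {1..L}" for l by (rule ZL2[OF that ulL2[OF that]])
  have b_eq: "b = integral\<^sup>L M g"
  proof -
    have "(\<Sum>l = 1..L. m l) = integral\<^sup>L M (\<lambda>\<omega>. \<Sum>l = 1..L. Zf l (ul l \<omega>))"
      unfolding m_def by (rule Bochner_Integration.integral_sum[symmetric]) (rule L2_integrable[OF ZuL2])
    then have "b = integral\<^sup>L M (\<lambda>\<omega>. \<Sum>l = 1..L. Zf l (ul l \<omega>)) - integral\<^sup>L M u"
      unfolding b_def by simp
    also have "\<dots> = integral\<^sup>L M (\<lambda>\<omega>. (\<Sum>l = 1..L. Zf l (ul l \<omega>)) - u \<omega>)"
    proof (rule Bochner_Integration.integral_diff[symmetric])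
      have "L2rv M (\<lambda>\<omega>. \<Sum>l = 1..L. Zf l (ul l \<omega>))" by (rule L2_sum) (rule ZuL2)
      then show "integrable M (\<lambda>\<omega>. \<Sum>l = 1..L. Zf l (ul l \<omega>))" by (rule L2_integrable)
      show "integrable M u" by (rule L2_integrable[OF uL2])
    qed
    also have "\<dots> = integral\<^sup>L M g"
    proof (rule Bochner_Integration.integral_cong[OF refl])
      fix \<omega>
      have tel: "(\<Sum>l = 1..L. ul l \<omega> - uprev l \<omega>) = ul L \<omega>"
        unfolding uprev_def using telescope[of L "\<lambda>l. ul l \<omega>"] L2 by simp
      have "(\<Sum>l = 1..L. Zf l (ul l \<omega>)) = (\<Sum>l = 1..L. (ul l \<omega> - uprev l \<omega>) + (uprev l \<omega> - Pproj V l (ul l \<omega>)))"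
        by (simp add: Zf_def)
      also have "\<dots> = ul L \<omega> + (\<Sum>l = 1..L. uprev l \<omega> - Pproj V l (ul l \<omega>))"
        by (simp only: sum.distrib tel)
      finally show "(\<Sum>l = 1..L. Zf l (ul l \<omega>)) - u \<omega> = g \<omega>" unfolding g_def by (simp add: algebra_simps)
    qed
    finally show ?thesis .
  qed
  have gL2: "L2rv M g"
  proof -
    have "L2rv M (\<lambda>\<omega>. (ul L \<omega> - u \<omega>) + (\<Sum>l = 1..L. uprev l \<omega> - Pproj V l (ul l \<omega>)))"
    proof (rule L2_add[OF L2_diff[OF ulL2[OF L1] uL2] L2_sum])
      fix l assume l: "l \<in> {1..L}"
      have "L2rv M (\<lambda>\<omega>. uprev l \<omega> - ul l \<omega> + Zf l (ul l \<omega>))"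
        by (rule L2_add[OF L2_diff[OF uprevL2[OF l] ulL2[OF l]] ZuL2[OF l]])
      then show "L2rv M (\<lambda>\<omega>. uprev l \<omega> - Pproj V l (ul l \<omega>))" by (simp add: Zf_def)
    qed
    then show ?thesis unfolding g_def .
  qed
  have gbd: "norm (g \<omega>) \<le> norm (u \<omega> - ul L \<omega>) + (\<Sum>l = 1..L. cf l * norm (ul l \<omega> - uprev l \<omega>))"
    if om: "\<omega> \<in> space M" for \<omega>
  proof -
    have "norm (g \<omega>) \<le> norm (ul L \<omega> - u \<omega>) + norm (\<Sum>l = 1..L. uprev l \<omega> - Pproj V l (ul l \<omega>))"
      unfolding g_def by (rule norm_triangle_ineq)
    also have "norm (\<Sum>l = 1..L. uprev l \<omega> - Pproj V l (ul l \<omega>)) \<le> (\<Sum>l = 1..L. norm (uprev l \<omega> - Pproj V l (ul l \<omega>)))"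
      by (rule norm_sum)
    also have "\<dots> \<le> (\<Sum>l = 1..L. cf l * norm (ul l \<omega> - uprev l \<omega>))"
    proof (rule sum_mono)
      fix l assume l: "l \<in> {1..L}"
      show "norm (uprev l \<omega> - Pproj V l (ul l \<omega>)) \<le> cf l * norm (ul l \<omega> - uprev l \<omega>)"
      proof (cases "l = 1")
        case True then show ?thesis by (simp add: uprev_def Pproj_def cf_def)
      next
        case False
        then have l2: "l \<ge> 2" and l1: "l - 1 \<in> {1..L}" using l by auto
        have "norm (ul (l - 1) \<omega> - Pproj V l (ul l \<omega>)) \<le> norm (ul (l - 1) \<omega> - ul l \<omega>)"
          by (rule Pproj_best(2)[OF Pg[OF l] l2 ulV[OF l1 om]])
        then show ?thesis using False by (simp add: uprev_def cf_def norm_minus_commute)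
      qed
    qed
    finally show ?thesis by (simp add: norm_minus_commute)
  qed
  have b_bd: "norm b \<le> e L + (\<Sum>l = 1..L. cf l * a l)"
  proof -
    have h: "integrable M (\<lambda>\<omega>. cf l * norm (ul l \<omega> - uprev l \<omega>))" if "l \<in> {1..L}" for l
      using L2_integrable_norm[OF dL2[OF that]] by simp
    have i1: "integrable M (\<lambda>\<omega>. norm (u \<omega> - ul L \<omega>))"
      by (rule L2_integrable_norm[OF L2_diff[OF uL2 ulL2[OF L1]]])
    have i2: "integrable M (\<lambda>\<omega>. \<Sum>l = 1..L. cf l * norm (ul l \<omega> - uprev l \<omega>))"
      by (rule Bochner_Integration.integrable_sum) (rule h)
    have "norm b \<le> integral\<^sup>L M (\<lambda>\<omega>. norm (g \<omega>))" unfolding b_eq by (rule integral_norm_bound_v)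
    also have "\<dots> \<le> integral\<^sup>L M (\<lambda>\<omega>. norm (u \<omega> - ul L \<omega>) + (\<Sum>l = 1..L. cf l * norm (ul l \<omega> - uprev l \<omega>)))"
    proof (rule integral_mono)
      show "integrable M (\<lambda>\<omega>. norm (g \<omega>))" by (rule L2_integrable_norm[OF gL2])
      show "integrable M (\<lambda>\<omega>. norm (u \<omega> - ul L \<omega>) + (\<Sum>l = 1..L. cf l * norm (ul l \<omega> - uprev l \<omega>)))"
        by (rule Bochner_Integration.integrable_add[OF i1 i2])
      fix \<omega> assume "\<omega> \<in> space M"
      then show "norm (g \<omega>) \<le> norm (u \<omega> - ul L \<omega>) + (\<Sum>l = 1..L. cf l * norm (ul l \<omega> - uprev l \<omega>))"
        by (rule gbd)
    qed
    also have "\<dots> = integral\<^sup>L M (\<lambda>\<omega>. norm (u \<omega> - ul L \<omega>)) + integral\<^sup>L M (\<lambda>\<omega>. \<Sum>l = 1..L. cf l * norm (ul l \<omega> - uprev l \<omega>))"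
      by (rule Bochner_Integration.integral_add[OF i1 i2])
    also have "integral\<^sup>L M (\<lambda>\<omega>. \<Sum>l = 1..L. cf l * norm (ul l \<omega> - uprev l \<omega>))
        = (\<Sum>l = 1..L. cf l * integral\<^sup>L M (\<lambda>\<omega>. norm (ul l \<omega> - uprev l \<omega>)))"
    proof -
      have "integral\<^sup>L M (\<lambda>\<omega>. \<Sum>l = 1..L. cf l * norm (ul l \<omega> - uprev l \<omega>))
        = (\<Sum>l = 1..L. integral\<^sup>L M (\<lambda>\<omega>. cf l * norm (ul l \<omega> - uprev l \<omega>)))"
        by (rule Bochner_Integration.integral_sum) (rule h)
      then show ?thesis by simp
    qed
    also have "integral\<^sup>L M (\<lambda>\<omega>. norm (u \<omega> - ul L \<omega>)) + (\<Sum>l = 1..L. cf l * integral\<^sup>L M (\<lambda>\<omega>. norm (ul l \<omega> - uprev l \<omega>)))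
        \<le> e L + (\<Sum>l = 1..L. cf l * a l)"
    proof (rule add_mono)
      show "integral\<^sup>L M (\<lambda>\<omega>. norm (u \<omega> - ul L \<omega>)) \<le> e L"
        unfolding e_def by (rule jensen_v[OF L2_diff[OF uL2 ulL2[OF L1]]])
      show "(\<Sum>l = 1..L. cf l * integral\<^sup>L M (\<lambda>\<omega>. norm (ul l \<omega> - uprev l \<omega>))) \<le> (\<Sum>l = 1..L. cf l * a l)"
        unfolding a_def by (intro sum_mono mult_left_mono cf0 jensen_v dL2) auto
    qed
    finally show ?thesis .
  qed
  have a_bd: "a l \<le> e l + (if l = 1 then U else e (l - 1))" if l: "l \<in> {1..L}" for l
  proof -
    have "a l = L2norm M (\<lambda>\<omega>. (u \<omega> - uprev l \<omega>) - (u \<omega> - ul l \<omega>))"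
      unfolding a_def by (simp add: algebra_simps)
    also have "\<dots> \<le> L2norm M (\<lambda>\<omega>. u \<omega> - uprev l \<omega>) + e l"
      unfolding e_def by (rule minkowski_v[OF L2_diff[OF uL2 uprevL2[OF l]] L2_diff[OF uL2 ulL2[OF l]]])
    also have "L2norm M (\<lambda>\<omega>. u \<omega> - uprev l \<omega>) = (if l = 1 then U else e (l - 1))"
      by (simp add: uprev_def U_def e_def)
    finally show ?thesis by simp
  qed
  define EA where "EA = integral\<^sup>L M (\<lambda>\<omega>. (norm (A \<omega>))\<^sup>2)"
  have EA0: "0 \<le> EA" unfolding EA_def by simp
  have "(\<lambda>\<omega>. (norm (E_PML V L N Xs \<omega> - integral\<^sup>L M u))\<^sup>2) = (\<lambda>\<omega>. (norm (A \<omega> + b))\<^sup>2)"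
    by (simp add: decomp)
  then have eq1: "integral\<^sup>L M (\<lambda>\<omega>. (norm (E_PML V L N Xs \<omega> - integral\<^sup>L M u))\<^sup>2) = EA + (norm b)\<^sup>2"
    using main_eq unfolding EA_def by simp
  have "sqrt (integral\<^sup>L M (\<lambda>\<omega>. (norm (E_PML V L N Xs \<omega> - integral\<^sup>L M u))\<^sup>2)) \<le> sqrt EA + sqrt ((norm b)\<^sup>2)"
    unfolding eq1 by (rule sqrt_add_le_add_sqrt[OF EA0]) simp
  also have "sqrt ((norm b)\<^sup>2) = norm b" by simp
  also have "sqrt EA \<le> sqrt (\<Sum>l = 1..L. q l / real (N l))"
    unfolding EA_def by (rule real_sqrt_le_mono[OF varA_bd])
  also have "\<dots> \<le> (\<Sum>l = 1..L. s l * a l)" by (rule sq_bd)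
  finally have lhs: "sqrt (integral\<^sup>L M (\<lambda>\<omega>. (norm (E_PML V L N Xs \<omega> - integral\<^sup>L M u))\<^sup>2))
      \<le> (\<Sum>l = 1..L. s l * a l) + e L + (\<Sum>l = 1..L. (if l = 1 then 0 else 1) * a l)"
    using b_bd unfolding cf_def by linarith
  have fa: "(\<Sum>l = 1..L. s l * a l) + e L + (\<Sum>l = 1..L. (if l = 1 then 0 else 1) * a l)
     \<le> (s 1 + 2 * (\<Sum>l = 2..L. s l)) * U
        + (\<Sum>l = 1..L. (if l = 1 then 1 + s 1 + 2 * s 2
                         else if l = L then 2 + 2 * s L
                         else 2 + 2 * s l + 2 * s (l + 1)) * e l)"
  proof -
    have e0: "0 \<le> e l" for l unfolding e_def by (rule L2norm_nonneg)
    have U0: "0 \<le> U" unfolding U_def by (rule L2norm_nonneg)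
    show ?thesis by (rule final_arith[OF L2 s0 e0 U0 a_bd])
  qed
  have r1: "s 1 + 2 * (\<Sum>l = 2..L. s l) = c0 L N" unfolding c0_def s_def ..
  have r2: "(\<Sum>l = 1..L. (if l = 1 then 1 + s 1 + 2 * s 2
                         else if l = L then 2 + 2 * s L
                         else 2 + 2 * s l + 2 * s (l + 1)) * e l)
      = (\<Sum>l = 1..L. cl L N l * L2norm M (\<lambda>\<omega>. u \<omega> - ul l \<omega>))"
    by (rule sum.cong[OF refl]) (simp add: cl_def s_def e_def)
  show ?thesis using lhs fa unfolding r1 r2 U_def by linarith
qed

end
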